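(* Suppose $\mathrm{OPT}_\tau$ crosses a vertical line $\Gamma$ at least twice. Let $p_1,p_2$ be two such crossing points and let $L_1$ be a subpath of $\mathrm{OPT}_\tau$ from $p_1$ to $p_2$ having no other crossings with $\Gamma$. Then $\mathrm{OPT}_\tau$ has no other crossing with $\Gamma$ on the segment $p_1p_2$ of $\Gamma$.
   Context: Instance: vertical line segments in $\mathbb{R}^2$, each of length $1$, with pairwise distinct $x$-coordinates; the minimal bounding box has height $H>3$. A tour is a cyclic sequence of points, each on some segment, with each segment containing one of them; consecutive points are joined by straight legs; cost is total length. $\mathrm{OPT}$ is a fixed oriented minimum-cost tour with no two consecutive points on the same segment and not self-crossing. Cover-lines: horizontal lines $C_1,C_2,\dots$ (top to bottom) spaced $1$ apart, $C_1$ through the bottom tip of the top-most segment; a segment is covered by the top-most cover-line intersecting it. Strip $S_\tau$: closed region between $C_\tau$ and $C_{\tau+1}$; its top segments are those intersecting $C_\tau$ and its bottom segments those covered by $C_{\tau+1}$. $\mathrm{OPT}_\tau$: the restriction of $\mathrm{OPT}$ to $S_\tau$, with points added where legs meet $C_\tau$ or $C_{\tau+1}$. *)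

theory Defs
  imports "HOL-Analysis.Analysis"
begin

type_synonym point = "real \<times> real"

text \<open>A vertical unit segment is represented by its bottom tip b.\<close>
definition vseg :: "point \<Rightarrow> point set" where
  "vseg b = {(fst b, y) | y. snd b \<le> y \<and> y \<le> snd b + 1}"

definition top_y :: "point set \<Rightarrow> real" where
  "top_y P = Max ((\<lambda>b. snd b + 1) ` P)"

definition bot_y :: "point set \<Rightarrow> real" where
  "bot_y P = Min (snd ` P)"

definition seg_instance :: "point set \<Rightarrow> bool" where
  "seg_instance P \<longleftrightarrow> finite P \<and> P \<noteq> {} \<and> inj_on fst P \<and> top_y P - bot_y P > 3"

definition is_tour :: "point set \<Rightarrow> point list \<Rightarrow> bool" where
  "is_tour P ps \<longleftrightarrow> ps \<noteq> [] \<and> (\<forall>p\<in>set ps. \<exists>b\<in>P. p \<in> vseg b)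
     \<and> (\<forall>b\<in>P. \<exists>!i. i < length ps \<and> ps ! i \<in> vseg b)"

definition nxt :: "point list \<Rightarrow> nat \<Rightarrow> point" where
  "nxt ps i = ps ! ((i + 1) mod length ps)"

definition cost :: "point list \<Rightarrow> real" where
  "cost ps = (\<Sum>i<length ps. dist (ps ! i) (nxt ps i))"

definition no_consec_same_seg :: "point set \<Rightarrow> point list \<Rightarrow> bool" where
  "no_consec_same_seg P ps \<longleftrightarrow>
     (\<forall>i<length ps. \<forall>b\<in>P. \<not> (ps ! i \<in> vseg b \<and> nxt ps i \<in> vseg b))"

definition leg :: "point list \<Rightarrow> nat \<Rightarrow> point set" where
  "leg ps i = closed_segment (ps ! i) (nxt ps i)"

definition legs_cross :: "point list \<Rightarrow> nat \<Rightarrow> nat \<Rightarrow> bool" where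
  "legs_cross ps i j \<longleftrightarrow> (\<exists>q. leg ps i \<inter> leg ps j = {q}
      \<and> q \<in> open_segment (ps ! i) (nxt ps i) \<and> q \<in> open_segment (ps ! j) (nxt ps j))"

definition non_self_crossing :: "point list \<Rightarrow> bool" where
  "non_self_crossing ps \<longleftrightarrow>
     (\<forall>i<length ps. \<forall>j<length ps. i \<noteq> j \<longrightarrow> \<not> legs_cross ps i j)"

text \<open>Parametrisation of the closed polygonal tour, period = length ps;
  on [k, k+1] it traverses leg k.\<close>
definition curve :: "point list \<Rightarrow> real \<Rightarrow> point" where
  "curve ps t = (let n = length ps; k = nat (\<lfloor>t\<rfloor> mod int n); u = t - of_int \<lfloor>t\<rfloor>
                 in (1 - u) *\<^sub>R (ps ! k) + u *\<^sub>R (ps ! ((k + 1) mod n)))"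

text \<open>Cover line C_k (k \<ge> 1) is at height top_y P - k; C_1 passes through the
  bottom tip of the top-most segment.\<close>
definition cover_y :: "point set \<Rightarrow> nat \<Rightarrow> real" where
  "cover_y P k = top_y P - real k"

definition strip :: "point set \<Rightarrow> nat \<Rightarrow> point set" where
  "strip P \<tau> = {p. cover_y P (\<tau> + 1) \<le> snd p \<and> snd p \<le> cover_y P \<tau>}"

text \<open>OPT_tau as a point set: the part of the tour lying in the strip.\<close>
definition restr :: "point set \<Rightarrow> point list \<Rightarrow> nat \<Rightarrow> point set" where
  "restr P ps \<tau> = range (curve ps) \<inter> strip P \<tau>"

end

theory Submission
  imports Defs "HOL-Analysis.Analysis"
begin

definition nx :: "nat \<Rightarrow> nat \<Rightarrow> nat" where "nx n k = (k + 1) mod n"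
definition pv :: "nat \<Rightarrow> nat \<Rightarrow> nat" where "pv n k = (k + n - 1) mod n"

lemma vseg_fst: "p \<in> vseg b \<Longrightarrow> fst p = fst b"
  by (auto simp: vseg_def)

lemma vseg_iff: "p \<in> vseg b \<longleftrightarrow> fst p = fst b \<and> snd b \<le> snd p \<and> snd p \<le> snd b + 1"
  by (cases p) (auto simp: vseg_def)

lemma tour_distinct:
  assumes "is_tour P ps" shows "distinct ps"
proof -
  { fix i j assume ij: "i < length ps" "j < length ps" "i \<noteq> j" "ps ! i = ps ! j"
    obtain b where b: "b \<in> P" "ps ! i \<in> vseg b" using assms ij unfolding is_tour_def
      by (meson nth_mem)
    then obtain k where "\<forall>i'. (i' < length ps \<and> ps ! i' \<in> vseg b) \<longrightarrow> i' = k"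
      using assms unfolding is_tour_def by metis
    hence False using ij b by metis }
  thus ?thesis by (auto simp: distinct_conv_nth)
qed

lemma tour_iff:
  assumes "inj_on fst P"
  shows "is_tour P ps \<longleftrightarrow> ps \<noteq> [] \<and> distinct ps \<and> (\<forall>p\<in>set ps. \<exists>b\<in>P. p \<in> vseg b)
     \<and> (\<forall>b\<in>P. \<exists>p\<in>set ps. p \<in> vseg b)
     \<and> (\<forall>b\<in>P. \<forall>p\<in>set ps. \<forall>p'\<in>set ps. p \<in> vseg b \<longrightarrow> p' \<in> vseg b \<longrightarrow> p = p')"
proof
  assume t: "is_tour P ps"
  have d: "distinct ps" by (rule tour_distinct[OF t])
  have "\<forall>b\<in>P. \<exists>p\<in>set ps. p \<in> vseg b"
  proof
    fix b assume "b \<in> P"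
    then obtain i where "i < length ps" "ps ! i \<in> vseg b" using t unfolding is_tour_def by blast
    thus "\<exists>p\<in>set ps. p \<in> vseg b" by (meson nth_mem)
  qed
  moreover have "\<forall>b\<in>P. \<forall>p\<in>set ps. \<forall>p'\<in>set ps. p \<in> vseg b \<longrightarrow> p' \<in> vseg b \<longrightarrow> p = p'"
  proof (intro ballI impI)
    fix b p p' assume b: "b \<in> P" and p: "p \<in> set ps" "p' \<in> set ps" "p \<in> vseg b" "p' \<in> vseg b"
    obtain i j where ij: "i < length ps" "j < length ps" "ps ! i = p" "ps ! j = p'"
      using p by (meson in_set_conv_nth)
    obtain k where "\<forall>i'. (i' < length ps \<and> ps ! i' \<in> vseg b) \<longrightarrow> i' = k"
      using t b unfolding is_tour_def by metis
    hence "i = j" using ij p by metis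
    thus "p = p'" using ij by simp
  qed
  ultimately show "ps \<noteq> [] \<and> distinct ps \<and> (\<forall>p\<in>set ps. \<exists>b\<in>P. p \<in> vseg b)
     \<and> (\<forall>b\<in>P. \<exists>p\<in>set ps. p \<in> vseg b)
     \<and> (\<forall>b\<in>P. \<forall>p\<in>set ps. \<forall>p'\<in>set ps. p \<in> vseg b \<longrightarrow> p' \<in> vseg b \<longrightarrow> p = p')"
    using t d unfolding is_tour_def by blast
next
  assume h: "ps \<noteq> [] \<and> distinct ps \<and> (\<forall>p\<in>set ps. \<exists>b\<in>P. p \<in> vseg b)
     \<and> (\<forall>b\<in>P. \<exists>p\<in>set ps. p \<in> vseg b)
     \<and> (\<forall>b\<in>P. \<forall>p\<in>set ps. \<forall>p'\<in>set ps. p \<in> vseg b \<longrightarrow> p' \<in> vseg b \<longrightarrow> p = p')"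
  show "is_tour P ps" unfolding is_tour_def
  proof (intro conjI ballI)
    show "ps \<noteq> []" using h by blast
    show "\<And>p. p \<in> set ps \<Longrightarrow> \<exists>b\<in>P. p \<in> vseg b" using h by blast
    fix b assume b: "b \<in> P"
    then obtain p where p: "p \<in> set ps" "p \<in> vseg b" using h by blast
    then obtain i where i: "i < length ps" "ps ! i = p" by (meson in_set_conv_nth)
    show "\<exists>!i. i < length ps \<and> ps ! i \<in> vseg b"
    proof (rule ex1I[of _ i])
      show "i < length ps \<and> ps ! i \<in> vseg b" using i p by simp
      fix j assume j: "j < length ps \<and> ps ! j \<in> vseg b"
      hence "ps ! j = ps ! i" using h b i p by (metis nth_mem)
      thus "j = i" using h i j nth_eq_iff_index_eq by blast
    qed
  qed
qed

lemma tour_fst_inj: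
  assumes "inj_on fst P" "is_tour P ps" "p \<in> set ps" "p' \<in> set ps" "fst p = fst p'"
  shows "p = p'"
proof -
  obtain b b' where "b \<in> P" "b' \<in> P" "p \<in> vseg b" "p' \<in> vseg b'"
    using assms unfolding is_tour_def by blast
  moreover hence "b = b'" using assms(1,5) by (metis inj_onD vseg_fst)
  ultimately show ?thesis using assms tour_iff by metis
qed

fun plen :: "point list \<Rightarrow> real" where
  "plen (x # y # r) = dist x y + plen (y # r)"
| "plen _ = 0"

lemma plen_Cons: "xs \<noteq> [] \<Longrightarrow> plen (x # xs) = dist x (hd xs) + plen xs"
  by (cases xs) auto

lemma plen_append: "xs \<noteq> [] \<Longrightarrow> ys \<noteq> [] \<Longrightarrow> plen (xs @ ys) = plen xs + dist (last xs) (hd ys) + plen ys"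
proof (induction xs rule: plen.induct)
  case (1 x y r) thus ?case by simp
next
  case ("2_1") thus ?case by simp
next
  case ("2_2" x) thus ?case by (cases ys) auto
qed

lemma plen_snoc: "xs \<noteq> [] \<Longrightarrow> plen (xs @ [y]) = plen xs + dist (last xs) y"
  using plen_append[of xs "[y]"] by simp

lemma plen_rev: "plen (rev xs) = plen xs"
proof (induction xs rule: plen.induct)
  case (1 x y r)
  have "plen (rev (x # y # r)) = plen (rev (y # r) @ [x])" by simp
  also have "\<dots> = plen (rev (y#r)) + dist y x" by (subst plen_snoc) (auto simp: last_rev)
  finally show ?case using 1 by (simp add: dist_commute)
qed auto

lemma plen_nth: "plen xs = (\<Sum>i<length xs - 1. dist (xs ! i) (xs ! (i+1)))"
proof (induction xs rule: plen.induct)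
  case (1 x y r)
  have "(\<Sum>i<length (x#y#r) - 1. dist ((x#y#r) ! i) ((x#y#r) ! (i+1)))
      = dist x y + (\<Sum>i<length (y#r) - 1. dist ((y#r) ! i) ((y#r) ! (i+1)))"
    by (simp add: sum.lessThan_Suc_shift del: sum.lessThan_Suc)
  thus ?case using 1 by simp
qed auto

lemma cost_plen:
  assumes "ps \<noteq> []" shows "cost ps = plen ps + dist (last ps) (hd ps)"
proof -
  let ?n = "length ps"
  have n: "?n \<ge> 1" using assms by (cases ps) auto
  have "cost ps = (\<Sum>i<?n. dist (ps ! i) (ps ! ((i+1) mod ?n)))" by (simp add: cost_def nxt_def)
  also have "\<dots> = (\<Sum>i<?n - 1. dist (ps ! i) (ps ! ((i+1) mod ?n))) + dist (ps ! (?n - 1)) (ps ! ((?n - 1 + 1) mod ?n))"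
    using n by (metis (no_types, lifting) Suc_diff_1 less_le_trans sum.lessThan_Suc zero_less_one)
  also have "(\<Sum>i<?n - 1. dist (ps ! i) (ps ! ((i+1) mod ?n))) = (\<Sum>i<?n - 1. dist (ps ! i) (ps ! (i+1)))"
    by (intro sum.cong) auto
  also have "ps ! ((?n - 1 + 1) mod ?n) = hd ps" using n assms by (simp add: hd_conv_nth)
  also have "ps ! (?n - 1) = last ps" using assms by (simp add: last_conv_nth)
  finally show ?thesis by (simp add: plen_nth)
qed

lemma cost_rotate1: "cost (rotate1 ps) = cost ps"
proof (cases ps)
  case (Cons x xs)
  show ?thesis
  proof (cases xs)
    case Nil thus ?thesis using Cons by simp
  next
    case (Cons y ys)
    have "cost (rotate1 ps) = cost (xs @ [x])" using \<open>ps = x # xs\<close> by simp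
    also have "\<dots> = plen xs + dist (last xs) x + dist x (hd xs)"
    proof -
      have c1: "cost (xs @ [x]) = plen (xs@[x]) + dist (last (xs@[x])) (hd (xs@[x]))"
        by (rule cost_plen) simp
      have "plen (xs@[x]) = plen xs + dist (last xs) x" using Cons plen_snoc by blast
      thus ?thesis using c1 Cons by simp
    qed
    also have "\<dots> = cost ps" using \<open>ps = x # xs\<close> Cons by (simp add: cost_plen plen_Cons)
    finally show ?thesis .
  qed
qed simp

lemma cost_rotate: "cost (rotate k ps) = cost ps"
  by (induction k) (auto simp: cost_rotate1)

lemma tour_rotate: "inj_on fst P \<Longrightarrow> is_tour P (rotate k ps) \<longleftrightarrow> is_tour P ps"
  by (simp add: tour_iff)

lemma seg_dist: "w \<in> closed_segment x (y::point) \<Longrightarrow> dist x w + dist w y = dist x y"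
  using between between_mem_segment by metis

lemma dist_seg: "dist x (y::point) = dist x w + dist w y \<Longrightarrow> w \<in> closed_segment x y"
  using between between_mem_segment by metis

lemma rot_setup:
  assumes k: "k < length ps"
  defines "qs \<equiv> rotate k ps"
  shows "length qs = length ps" "\<And>i. i < length ps \<Longrightarrow> qs ! i = ps ! ((k + i) mod length ps)"
  using k by (auto simp: qs_def nth_rotate)

lemma reloc:
  assumes inj: "inj_on fst P" and t: "is_tour P ps" and opt: "\<forall>qs. is_tour P qs \<longrightarrow> cost ps \<le> cost qs"
    and k: "k < length ps" and j: "j < length ps"
    and w: "w \<in> closed_segment (ps!j) (nxt ps j)" and vj: "ps!k \<noteq> ps!j" "ps!k \<noteq> nxt ps j"
    and b: "b \<in> P" "ps!k \<in> vseg b" "w \<in> vseg b"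
  shows "ps!k \<in> closed_segment (ps ! pv (length ps) k) (ps ! nx (length ps) k)"
proof -
  define n where "n = length ps"
  define qs where "qs = rotate k ps"
  have lq: "length qs = n" by (simp add: qs_def n_def)
  have qn: "\<And>i. i < n \<Longrightarrow> qs ! i = ps ! ((k + i) mod n)"
    using rot_setup[OF k] by (simp add: qs_def n_def)
  have n0: "n > 0" using k unfolding n_def by linarith
  define v where "v = ps ! k"
  have qs0: "qs ! 0 = v" using qn[of 0] n0 k unfolding n_def by (simp add: v_def)
  define j2 where "j2 = (j + n - k) mod n"
  have j2n: "j2 < n" using n0 by (simp add: j2_def)
  have kj: "(k + j2) mod n = j"
  proof -
    have "(k + j2) mod n = (k + (j + n - k)) mod n" by (simp add: j2_def mod_add_right_eq)
    also have "k + (j + n - k) = j + n" using k n_def by simp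
    finally show ?thesis using j n_def by simp
  qed
  have qj2: "qs ! j2 = ps ! j" using qn[OF j2n] kj by simp
  have qj2': "qs ! ((j2 + 1) mod n) = nxt ps j"
  proof -
    have "(k + (j2 + 1) mod n) mod n = (j + 1) mod n"
      using kj by (metis add.assoc mod_add_left_eq mod_add_right_eq)
    thus ?thesis using qn[of "(j2+1) mod n"] n0 by (simp add: nxt_def n_def)
  qed
  have j20: "j2 \<noteq> 0" proof assume "j2 = 0" thus False using qj2 qs0 vj v_def by simp qed
  have j2n1: "j2 \<noteq> n - 1"
  proof
    assume "j2 = n - 1"
    hence "(j2 + 1) mod n = 0" using n0 by simp
    thus False using qj2' qs0 vj v_def by auto
  qed
  have n3: "n \<ge> 3" using j20 j2n1 j2n by linarith
  have qne: "qs \<noteq> []" using lq n0 by auto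
  define rest where "rest = tl qs"
  have qsr: "qs = v # rest" using qne qs0 unfolding rest_def by (cases qs) auto
  have lr: "length rest = n - 1" using lq qsr by auto
  have rn: "\<And>i. i < n - 1 \<Longrightarrow> rest ! i = qs ! (i + 1)" using qsr by simp
  define x where "x = ps ! j"
  define y where "y = nxt ps j"
  have rx: "rest ! (j2 - 1) = x" using rn[of "j2 - 1"] j20 j2n qj2 x_def by simp
  have ry: "rest ! j2 = y" using rn[of j2] j2n1 j2n qj2' y_def by simp
  define A where "A = take j2 rest"
  define B where "B = drop j2 rest"
  have Ane: "A \<noteq> []" using j20 lr n3 unfolding A_def by (cases rest) auto
  have Bne: "B \<noteq> []" using j2n1 j2n lr by (simp add: B_def)
  have lastA: "last A = x" using rx j20 j2n j2n1 lr Ane by (auto simp add: A_def last_conv_nth min_def)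
  have hdB: "hd B = y" using ry j2n j2n1 lr by (simp add: B_def hd_drop_conv_nth)
  have restAB: "rest = A @ B" by (simp add: A_def B_def)
  define rs where "rs = A @ w # B"
  have hdrs: "hd rs = hd rest" using Ane restAB by (simp add: rs_def)
  have lastrs: "last rs = last rest" using Bne restAB by (simp add: rs_def)
  have rne: "rest \<noteq> []" using Ane restAB by simp
  have plr: "plen rest = plen A + dist x y + plen B"
    using plen_append[OF Ane Bne] restAB lastA hdB by simp
  have plrs: "plen rs = plen A + dist x w + dist w y + plen B"
  proof -
    have "plen rs = plen A + dist (last A) w + plen (w # B)"
      using plen_append[OF Ane, of "w # B"] by (simp add: rs_def)
    also have "plen (w # B) = dist w y + plen B" using plen_Cons[OF Bne] hdB by simp
    finally show ?thesis using lastA by simp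
  qed
  have wxy: "dist x w + dist w y = dist x y" using seg_dist w x_def y_def by simp
  have crs: "cost rs = plen rest + dist (last rest) (hd rest)"
    using cost_plen[of rs] plrs plr wxy hdrs lastrs by (simp add: rs_def)
  have cqs: "cost qs = dist v (hd rest) + plen rest + dist (last rest) v"
    using cost_plen[of qs] qsr plen_Cons[OF rne] rne by simp
  have cq: "cost qs = cost ps" by (simp add: qs_def cost_rotate)
  have tq: "is_tour P qs" using t tour_rotate[OF inj] qs_def by simp
  note tqi = tq[unfolded tour_iff[OF inj]]
  have dq: "distinct qs" using tour_distinct[OF tq] .
  have setrs: "set rs = insert w (set rest)" using restAB by (auto simp: rs_def)
  have vnr: "v \<notin> set rest" using dq qsr by simp
  have fw: "fst w = fst b" using b vseg_fst by simp
  have wnr: "w \<notin> set rest"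
  proof
    assume "w \<in> set rest"
    moreover have "v \<in> set qs" using qsr by simp
    moreover have "w \<in> set qs" using \<open>w \<in> set rest\<close> qsr by simp
    moreover have "fst w = fst v" using fw b vseg_fst v_def by metis
    ultimately have "w = v" using tour_fst_inj[OF inj tq] by blast
    thus False using \<open>w \<in> set rest\<close> vnr by simp
  qed
  have drs: "distinct rs" using dq qsr wnr restAB by (auto simp: rs_def)
  have trs: "is_tour P rs"
    unfolding tour_iff[OF inj]
  proof (intro conjI ballI impI)
    show "rs \<noteq> []" by (simp add: rs_def)
    show "distinct rs" by (rule drs)
    fix p assume "p \<in> set rs"
    thus "\<exists>b\<in>P. p \<in> vseg b" using setrs b tqi qsr by auto
  next
    fix b' assume b': "b' \<in> P"
    show "\<exists>p\<in>set rs. p \<in> vseg b'"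
    proof (cases "b' = b")
      case True thus ?thesis using b setrs by auto
    next
      case False
      obtain p where p: "p \<in> set qs" "p \<in> vseg b'" using tqi b' by blast
      have "p \<noteq> v"
      proof
        assume "p = v"
        hence "fst b' = fst b" using p b vseg_fst v_def by metis
        thus False using inj b b' False by (meson inj_onD)
      qed
      thus ?thesis using p qsr setrs by auto
    qed
  next
    fix b' p p' assume b': "b' \<in> P" and pp: "p \<in> set rs" "p' \<in> set rs" "p \<in> vseg b'" "p' \<in> vseg b'"
    have uq: "\<And>r r'. r \<in> set qs \<Longrightarrow> r' \<in> set qs \<Longrightarrow> r \<in> vseg b' \<Longrightarrow> r' \<in> vseg b' \<Longrightarrow> r = r'"
      using tqi b' by blast
    show "p = p'"
    proof (cases "b' = b")
      case True
      have "\<And>r. r \<in> set rs \<Longrightarrow> r \<in> vseg b \<Longrightarrow> r = w"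
      proof -
        fix r assume r: "r \<in> set rs" "r \<in> vseg b"
        show "r = w"
        proof (rule ccontr)
          assume "r \<noteq> w"
          hence "r \<in> set rest" using r setrs by auto
          hence "r = v" using uq[of r v] r b True qsr v_def by auto
          thus False using \<open>r \<in> set rest\<close> vnr by simp
        qed
      qed
      thus ?thesis using pp True by metis
    next
      case False
      have "w \<notin> vseg b'"
      proof
        assume "w \<in> vseg b'"
        hence "fst b' = fst b" using fw vseg_fst by metis
        thus False using inj b b' False by (meson inj_onD)
      qed
      hence "p \<in> set qs" "p' \<in> set qs" using pp setrs qsr by auto
      thus ?thesis using uq pp by blast
    qed
  qed
  have "cost ps \<le> cost rs" using opt trs by blast
  hence le: "dist (last rest) v + dist v (hd rest) \<le> dist (last rest) (hd rest)"
    using crs cqs cq by (simp add: dist_commute)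
  have "dist (last rest) (hd rest) \<le> dist (last rest) v + dist v (hd rest)" by (rule dist_triangle)
  hence "v \<in> closed_segment (last rest) (hd rest)" using le dist_seg by (metis order_antisym)
  moreover have "last rest = ps ! pv n k"
  proof -
    have "last rest = last qs" using qsr rne by simp
    also have "\<dots> = qs ! (n - 1)" using qne lq by (simp add: last_conv_nth)
    also have "\<dots> = ps ! ((k + (n - 1)) mod n)" using qn n0 by simp
    finally show ?thesis using n0 by (simp add: pv_def)
  qed
  moreover have "hd rest = ps ! nx n k"
  proof -
    have "hd rest = qs ! 1" using qsr rne by (simp add: hd_conv_nth)
    thus ?thesis using qn[of 1] n3 by (simp add: nx_def add.commute)
  qed
  ultimately show ?thesis by (simp add: v_def n_def)
qed

definition cross :: "point \<Rightarrow> point \<Rightarrow> real" where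
  "cross u w = fst u * snd w - snd u * fst w"

lemma cross_scale: "cross (c *\<^sub>R u) (d *\<^sub>R w) = c * d * cross u w"
  by (simp add: cross_def algebra_simps)

lemma cross_swap: "cross u w = - cross w u" by (simp add: cross_def)

lemma cross_self: "cross u u = 0" by (simp add: cross_def)

lemma seg_param: "v \<in> closed_segment a b \<Longrightarrow> \<exists>\<theta>. 0 \<le> \<theta> \<and> \<theta> \<le> 1 \<and> v = (1 - \<theta>) *\<^sub>R a + \<theta> *\<^sub>R b"
  by (auto simp: closed_segment_def)

lemma seg_dir: assumes "v \<in> closed_segment a b" "v \<noteq> b" shows "\<exists>c>0. b - v = c *\<^sub>R (b - a)"
proof -
  obtain \<theta> where th: "0 \<le> \<theta>" "\<theta> \<le> 1" "v = (1 - \<theta>) *\<^sub>R a + \<theta> *\<^sub>R b" using seg_param[OF assms(1)] by blast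
  have "\<theta> \<noteq> 1" using th assms(2) by auto
  moreover have "b - v = (1 - \<theta>) *\<^sub>R (b - a)" using th by (simp add: algebra_simps)
  ultimately show ?thesis using th by (intro exI[of _ "1 - \<theta>"]) auto
qed

lemma seg_dir': assumes "v \<in> closed_segment a b" "v \<noteq> a" shows "\<exists>c>0. v - a = c *\<^sub>R (b - a)"
proof -
  obtain \<theta> where th: "0 \<le> \<theta>" "\<theta> \<le> 1" "v = (1 - \<theta>) *\<^sub>R a + \<theta> *\<^sub>R b" using seg_param[OF assms(1)] by blast
  have "\<theta> \<noteq> 0" using th assms(2) by auto
  moreover have "v - a = \<theta> *\<^sub>R (b - a)" using th by (simp add: algebra_simps)
  ultimately show ?thesis using th by (intro exI[of _ "\<theta>"]) auto
qed

lemma cross_collinear: assumes "v \<in> closed_segment a b" shows "cross (a - v) (b - v) = 0"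
proof -
  obtain \<theta> where th: "v = (1 - \<theta>) *\<^sub>R a + \<theta> *\<^sub>R b" using seg_param[OF assms] by blast
  show ?thesis unfolding th cross_def by (simp add: algebra_simps)
qed

lemma twoopt:
  assumes inj: "inj_on fst P" and t: "is_tour P ps" and opt: "\<forall>qs. is_tour P qs \<longrightarrow> cost ps \<le> cost qs"
    and k: "k < length ps" and j: "j < length ps"
    and v: "ps!k \<in> closed_segment (ps ! pv (length ps) k) (ps ! nx (length ps) k)"
    and vj: "ps!k \<in> open_segment (ps!j) (nxt ps j)"
    and cr: "cross (ps ! nx (length ps) k - ps ! pv (length ps) k) (nxt ps j - ps!j) \<noteq> 0"
  shows False
proof -
  define n where "n = length ps"
  define qs where "qs = rotate k ps"
  have lq: "length qs = n" by (simp add: qs_def n_def)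
  have qn: "\<And>i. i < n \<Longrightarrow> qs ! i = ps ! ((k + i) mod n)"
    using rot_setup[OF k] by (simp add: qs_def n_def)
  have n0: "n > 0" using k unfolding n_def by linarith
  define v where "v = ps ! k"
  have qs0: "qs ! 0 = v" using qn[of 0] n0 k unfolding n_def by (simp add: v_def)
  define j2 where "j2 = (j + n - k) mod n"
  have j2n: "j2 < n" using n0 by (simp add: j2_def)
  have kj: "(k + j2) mod n = j"
  proof -
    have "(k + j2) mod n = (k + (j + n - k)) mod n" by (simp add: j2_def mod_add_right_eq)
    also have "k + (j + n - k) = j + n" using k n_def by simp
    finally show ?thesis using j n_def by simp
  qed
  have qj2: "qs ! j2 = ps ! j" using qn[OF j2n] kj by simp
  have qj2': "qs ! ((j2 + 1) mod n) = nxt ps j"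
  proof -
    have "(k + (j2 + 1) mod n) mod n = (j + 1) mod n"
      using kj by (metis add.assoc mod_add_left_eq mod_add_right_eq)
    thus ?thesis using qn[of "(j2+1) mod n"] n0 by (simp add: nxt_def n_def)
  qed
  have vj': "v \<noteq> ps ! j" "v \<noteq> nxt ps j" using vj by (auto simp: open_segment_def v_def)
  have j20: "j2 \<noteq> 0" proof assume "j2 = 0" thus False using qj2 qs0 vj' by simp qed
  have j2n1: "j2 \<noteq> n - 1"
  proof
    assume "j2 = n - 1"
    hence "(j2 + 1) mod n = 0" using n0 by simp
    thus False using qj2' qs0 vj' by auto
  qed
  have n3: "n \<ge> 3" using j20 j2n1 j2n by linarith
  have qne: "qs \<noteq> []" using lq n0 by auto
  define rest where "rest = tl qs"
  have qsr: "qs = v # rest" using qne qs0 unfolding rest_def by (cases qs) auto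
  have lr: "length rest = n - 1" using lq qsr by auto
  have rn: "\<And>i. i < n - 1 \<Longrightarrow> rest ! i = qs ! (i + 1)" using qsr by simp
  define x where "x = ps ! j"
  define y where "y = nxt ps j"
  have rx: "rest ! (j2 - 1) = x" using rn[of "j2 - 1"] j20 j2n qj2 x_def by simp
  have ry: "rest ! j2 = y" using rn[of j2] j2n1 j2n qj2' y_def by simp
  define A where "A = take j2 rest"
  define B where "B = drop j2 rest"
  have Ane: "A \<noteq> []" using j20 lr n3 unfolding A_def by (cases rest) auto
  have Bne: "B \<noteq> []" using j2n1 j2n lr by (simp add: B_def)
  have lastA: "last A = x" using rx j20 j2n j2n1 lr Ane by (auto simp add: A_def last_conv_nth min_def)
  have hdB: "hd B = y" using ry j2n j2n1 lr by (simp add: B_def hd_drop_conv_nth)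
  have restAB: "rest = A @ B" by (simp add: A_def B_def)
  have rne: "rest \<noteq> []" using Ane restAB by simp
  have hdA: "hd A = hd rest" using Ane restAB by simp
  have lastB: "last B = last rest" using Bne restAB by simp
  define rs where "rs = v # rev A @ B"
  have plr: "plen rest = plen A + dist x y + plen B"
    using plen_append[OF Ane Bne] restAB lastA hdB by simp
  have plrs: "plen rs = dist v x + plen A + dist (hd rest) y + plen B"
  proof -
    have ne: "rev A @ B \<noteq> []" using Bne by simp
    have "plen rs = dist v (hd (rev A @ B)) + plen (rev A @ B)"
      unfolding rs_def by (rule plen_Cons[OF ne])
    also have "hd (rev A @ B) = x" using Ane lastA by (simp add: hd_rev)
    also have "plen (rev A @ B) = plen (rev A) + dist (last (rev A)) (hd B) + plen B"
      using plen_append[of "rev A" B] Ane Bne by simp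
    also have "last (rev A) = hd rest" using Ane hdA by (simp add: last_rev)
    finally show ?thesis using hdB plen_rev[of A] by simp
  qed
  have crs: "cost rs = dist v x + plen A + dist (hd rest) y + plen B + dist (last rest) v"
    using cost_plen[of rs] plrs lastB Bne by (simp add: rs_def)
  have cqs: "cost qs = dist v (hd rest) + plen rest + dist (last rest) v"
    using cost_plen[of qs] qsr plen_Cons[OF rne] rne by simp
  have cq: "cost qs = cost ps" by (simp add: qs_def cost_rotate)
  have tq: "is_tour P qs" using t tour_rotate[OF inj] qs_def by simp
  have dq: "distinct qs" using tour_distinct[OF tq] .
  have setrs: "set rs = set qs" using qsr restAB by (auto simp: rs_def)
  have drs: "distinct rs" using dq qsr restAB by (auto simp: rs_def)
  have trs: "is_tour P rs"
  proof -
    note tqi = tq[unfolded tour_iff[OF inj]]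
    show ?thesis unfolding tour_iff[OF inj] setrs using tqi drs by (simp add: rs_def)
  qed
  have "cost ps \<le> cost rs" using opt trs by blast
  hence le: "dist v (hd rest) + dist x y \<le> dist v x + dist (hd rest) y"
    using crs cqs cq plr by simp
  have vxy: "dist x v + dist v y = dist x y" using seg_dist vj x_def y_def v_def
    by (simp add: open_segment_def)
  have "dist (hd rest) y \<le> dist (hd rest) v + dist v y" by (rule dist_triangle)
  hence "dist (hd rest) y = dist (hd rest) v + dist v y" using le vxy by (simp add: dist_commute)
  hence vw: "v \<in> closed_segment (hd rest) y" by (rule dist_seg)
  have hdr: "hd rest = ps ! nx n k"
  proof -
    have "hd rest = qs ! 1" using qsr rne by (simp add: hd_conv_nth)
    thus ?thesis using qn[of 1] n3 by (simp add: nx_def add.commute)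
  qed
  have dst: "distinct ps" using tour_distinct[OF t] .
  have nxk: "nx n k < n" "pv n k < n" using n0 by (auto simp: nx_def pv_def)
  have "nx n k \<noteq> k"
  proof (cases "k + 1 < n")
    case True thus ?thesis by (simp add: nx_def)
  next
    case False hence "k + 1 = n" using k n_def by simp
    thus ?thesis using n3 by (simp add: nx_def)
  qed
  hence vnw: "v \<noteq> hd rest" using dst hdr nxk k by (simp add: v_def n_def nth_eq_iff_index_eq)
  have vny: "v \<noteq> y" using vj' y_def by simp
  have c0: "cross (hd rest - v) (y - v) = 0" using cross_collinear[OF vw] .
  obtain c1 where c1: "c1 > 0" "hd rest - v = c1 *\<^sub>R (ps ! nx n k - ps ! pv n k)"
    using seg_dir[OF v[folded n_def v_def]] vnw hdr by metis
  obtain c2 where c2: "c2 > 0" "y - v = c2 *\<^sub>R (nxt ps j - ps ! j)"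
    using seg_dir[of v x y] vj vny unfolding x_def y_def v_def open_segment_def by auto
  have "cross (hd rest - v) (y - v) = c1 * c2 * cross (ps ! nx n k - ps ! pv n k) (nxt ps j - ps ! j)"
    using c1 c2 cross_scale by simp
  thus False using c0 c1 c2 cr n_def by simp
qed

lemma idx_succ: assumes "n > 0" shows "nat ((m + 1) mod int n) = nx n (nat (m mod int n))"
proof -
  have "int (nx n (nat (m mod int n))) = (m + 1) mod int n"
    using assms by (simp add: nx_def zmod_int of_nat_add) (metis add.commute mod_add_left_eq)
  thus ?thesis by linarith
qed

lemma idx_pred: assumes "n > 0" shows "nat ((m - 1) mod int n) = pv n (nat (m mod int n))"
proof -
  have "int (pv n (nat (m mod int n))) = (m mod int n + int n - 1) mod int n"
    using assms by (simp add: pv_def zmod_int of_nat_diff)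
  also have "\<dots> = (m + int n - 1) mod int n" by (metis mod_add_left_eq mod_diff_left_eq add_diff_eq)
  also have "\<dots> = (m - 1) mod int n" by (metis add.commute add_diff_eq diff_add_eq mod_add_self1)
  finally show ?thesis by linarith
qed

lemma nx_lt: "n > 0 \<Longrightarrow> nx n k < n" by (simp add: nx_def)
lemma pv_lt: "n > 0 \<Longrightarrow> pv n k < n" by (simp add: pv_def)
lemma nx_pv: "n > 0 \<Longrightarrow> k < n \<Longrightarrow> nx n (pv n k) = k"
  by (cases k) (auto simp: nx_def pv_def mod_Suc_eq)
lemma pv_nx: "n > 0 \<Longrightarrow> k < n \<Longrightarrow> pv n (nx n k) = k"
proof -
  assume n: "n > 0" "k < n"
  show ?thesis
  proof (cases "k + 1 < n")
    case True thus ?thesis by (simp add: nx_def pv_def)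
  next
    case False hence "k + 1 = n" using n by simp
    thus ?thesis using n by (simp add: nx_def pv_def)
  qed
qed

lemma nxt_nx: "nxt ps i = ps ! nx (length ps) i" by (simp add: nxt_def nx_def)

lemma curve_int: "curve ps (of_int m) = ps ! nat (m mod int (length ps))"
  by (simp add: curve_def Let_def)

lemma curve_on:
  assumes n: "ps \<noteq> []" and t: "of_int m \<le> t" "t \<le> of_int m + 1"
  shows "curve ps t = (1 - (t - of_int m)) *\<^sub>R ps ! nat (m mod int (length ps))
            + (t - of_int m) *\<^sub>R ps ! nx (length ps) (nat (m mod int (length ps)))"
proof (cases "t = of_int m + 1")
  case True
  have "curve ps t = curve ps (of_int (m + 1))" using True by simp
  also have "\<dots> = ps ! nat ((m+1) mod int (length ps))" by (rule curve_int)
  also have "\<dots> = ps ! nx (length ps) (nat (m mod int (length ps)))" using idx_succ n by simp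
  finally show ?thesis using True by simp
next
  case False
  hence "\<lfloor>t\<rfloor> = m" using t by (simp add: floor_eq_iff)
  thus ?thesis by (simp add: curve_def Let_def nx_def)
qed

lemma curve_cont_piece:
  assumes n: "ps \<noteq> []"
  shows "continuous_on {of_int m .. of_int m + 1} (curve ps)"
proof -
  let ?A = "ps ! nat (m mod int (length ps))" and ?B = "ps ! nx (length ps) (nat (m mod int (length ps)))"
  have "continuous_on {of_int m .. of_int m + 1} (\<lambda>t. (1 - (t - of_int m)) *\<^sub>R ?A + (t - of_int m) *\<^sub>R ?B)"
    by (intro continuous_intros)
  thus ?thesis by (rule continuous_on_cong[THEN iffD1, rotated 2]) (auto simp: curve_on[OF n])
qed

lemma curve_cont:
  assumes n: "ps \<noteq> []" shows "continuous_on UNIV (curve ps)"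
proof (rule continuous_at_imp_continuous_on, intro ballI)
  fix t :: real
  define m where "m = \<lfloor>t\<rfloor>"
  have "continuous_on ({of_int (m - 1) .. of_int (m - 1) + 1} \<union> {of_int m .. of_int m + 1}) (curve ps)"
    by (intro continuous_on_closed_Un curve_cont_piece n) auto
  moreover have "{of_int (m - 1) .. of_int (m - 1) + 1} \<union> {of_int m .. of_int m + 1} = {of_int m - 1 .. of_int m + (1::real)}"
    by auto
  ultimately have c: "continuous_on {of_int m - 1 .. of_int m + (1::real)} (curve ps)" by simp
  have "t \<in> interior {of_int m - 1 .. of_int m + (1::real)}"
    using m_def by simp linarith
  thus "isCont (curve ps) t" using continuous_on_interior[OF c] by blast
qed

lemma curve_leg:
  assumes n: "ps \<noteq> []"
  shows "curve ps t \<in> closed_segment (ps ! nat (\<lfloor>t\<rfloor> mod int (length ps))) (nxt ps (nat (\<lfloor>t\<rfloor> mod int (length ps))))"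
proof -
  have "curve ps t = (1 - (t - of_int \<lfloor>t\<rfloor>)) *\<^sub>R ps ! nat (\<lfloor>t\<rfloor> mod int (length ps))
            + (t - of_int \<lfloor>t\<rfloor>) *\<^sub>R ps ! nx (length ps) (nat (\<lfloor>t\<rfloor> mod int (length ps)))"
    by (rule curve_on[OF n]) linarith+
  moreover have "0 \<le> t - of_int \<lfloor>t\<rfloor>" "t - of_int \<lfloor>t\<rfloor> \<le> 1" by linarith+
  ultimately show ?thesis unfolding closed_segment_def nxt_nx by blast
qed

lemma idx_lt: "ps \<noteq> [] \<Longrightarrow> nat (m mod int (length ps)) < length ps"
  by (simp add: nat_less_iff)

lemma curve_right:
  assumes n: "ps \<noteq> []" and m: "of_int m \<le> s" and e: "0 \<le> \<epsilon>" "s + \<epsilon> \<le> of_int m + 1"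
  shows "curve ps (s + \<epsilon>) = curve ps s + \<epsilon> *\<^sub>R (ps ! nx (length ps) (nat (m mod int (length ps))) - ps ! nat (m mod int (length ps)))"
proof -
  have e1: "curve ps s = (1 - (s - of_int m)) *\<^sub>R ps ! nat (m mod int (length ps))
            + (s - of_int m) *\<^sub>R ps ! nx (length ps) (nat (m mod int (length ps)))"
    using curve_on[OF n, of m s] m e by simp
  have e2: "curve ps (s + \<epsilon>) = (1 - (s + \<epsilon> - of_int m)) *\<^sub>R ps ! nat (m mod int (length ps))
            + (s + \<epsilon> - of_int m) *\<^sub>R ps ! nx (length ps) (nat (m mod int (length ps)))"
    using curve_on[OF n, of m "s + \<epsilon>"] m e by simp
  show ?thesis unfolding e1 e2 by (simp add: algebra_simps)
qed

lemma curve_left: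
  assumes n: "ps \<noteq> []" and m: "of_int m \<le> s - \<epsilon>" and e: "0 \<le> \<epsilon>" "s \<le> of_int m + 1"
  shows "curve ps (s - \<epsilon>) = curve ps s - \<epsilon> *\<^sub>R (ps ! nx (length ps) (nat (m mod int (length ps))) - ps ! nat (m mod int (length ps)))"
proof -
  have e1: "curve ps s = (1 - (s - of_int m)) *\<^sub>R ps ! nat (m mod int (length ps))
            + (s - of_int m) *\<^sub>R ps ! nx (length ps) (nat (m mod int (length ps)))"
    using curve_on[OF n, of m s] m e by simp
  have e2: "curve ps (s - \<epsilon>) = (1 - (s - \<epsilon> - of_int m)) *\<^sub>R ps ! nat (m mod int (length ps))
            + (s - \<epsilon> - of_int m) *\<^sub>R ps ! nx (length ps) (nat (m mod int (length ps)))"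
    using curve_on[OF n, of m "s - \<epsilon>"] m e by simp
  show ?thesis unfolding e1 e2 by (simp add: algebra_simps)
qed

lemma curve_left_int:
  assumes n: "ps \<noteq> []" and e: "0 \<le> \<epsilon>" "\<epsilon> \<le> 1"
  shows "curve ps (of_int m - \<epsilon>) = curve ps (of_int m) + \<epsilon> *\<^sub>R (ps ! pv (length ps) (nat (m mod int (length ps))) - ps ! nat (m mod int (length ps)))"
proof -
  have l0: "length ps > 0" using n by simp
  have "curve ps (of_int m - \<epsilon>) = (1 - (of_int m - \<epsilon> - of_int (m - 1))) *\<^sub>R ps ! nat ((m - 1) mod int (length ps))
            + (of_int m - \<epsilon> - of_int (m - 1)) *\<^sub>R ps ! nx (length ps) (nat ((m - 1) mod int (length ps)))"
    by (rule curve_on[OF n]) (use e in auto)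
  also have "nat ((m - 1) mod int (length ps)) = pv (length ps) (nat (m mod int (length ps)))"
    using idx_pred l0 by blast
  also have "nx (length ps) (pv (length ps) (nat (m mod int (length ps)))) = nat (m mod int (length ps))"
    using nx_pv l0 idx_lt[OF n] by blast
  finally show ?thesis by (simp add: curve_int algebra_simps)
qed

definition phi :: "real \<Rightarrow> point \<Rightarrow> real^2" where
  "phi \<sigma> p = (\<chi> i. if i = 1 then snd p else \<sigma> * fst p)"

lemma phi1[simp]: "phi \<sigma> p $ 1 = snd p" by (simp add: phi_def)
lemma phi2[simp]: "phi \<sigma> p $ 2 = \<sigma> * fst p" by (simp add: phi_def)

lemma phi_cont: "continuous_on S (phi \<sigma>)"
proof -
  have "continuous_on S (\<lambda>p::point. if i = 1 then snd p else \<sigma> * fst p)" for i :: 2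
    by (cases "i = 1") (simp_all add: continuous_on_snd continuous_on_fst continuous_on_mult_left continuous_on_id)
  thus ?thesis unfolding phi_def by (rule continuous_on_vec_lambda)
qed

lemma phi_inj: "\<sigma> \<noteq> 0 \<Longrightarrow> phi \<sigma> p = phi \<sigma> p' \<Longrightarrow> p = p'"
proof -
  assume s: "\<sigma> \<noteq> 0" and e: "phi \<sigma> p = phi \<sigma> p'"
  have "snd p = snd p'" using arg_cong[OF e, of "\<lambda>v. v $ 1"] by simp
  moreover have "\<sigma> * fst p = \<sigma> * fst p'" using arg_cong[OF e, of "\<lambda>v. v $ 2"] by simp
  ultimately show ?thesis using s by (simp add: prod_eq_iff)
qed

lemma hit:
  fixes f g :: "real \<Rightarrow> point" and \<sigma> c :: real
  assumes pf: "path f" and pg: "path g" and sg: "\<sigma> = 1 \<or> \<sigma> = -1"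
    and side: "\<forall>x\<in>path_image f \<union> path_image g. \<sigma> * c \<le> \<sigma> * fst x"
    and e: "fst (pathstart f) = c" "fst (pathfinish f) = c" "fst (pathstart g) = c" "fst (pathfinish g) = c"
    and o1: "snd (pathstart f) < snd (pathstart g)" and o2: "snd (pathstart g) < snd (pathfinish f)"
    and o3: "snd (pathfinish f) < snd (pathfinish g)"
  shows "\<exists>z. z \<in> path_image f \<and> z \<in> path_image g"
proof -
  have "bounded (path_image f \<union> path_image g)"
    using compact_path_image[OF pf] compact_path_image[OF pg] by (simp add: compact_imp_bounded)
  then obtain B where B: "\<And>x. x \<in> path_image f \<union> path_image g \<Longrightarrow> norm x \<le> B"
    by (meson bounded_iff)
  define a :: "real^2" where "a = (\<chi> i. if i = 1 then - B else \<sigma> * c)"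
  define b :: "real^2" where "b = (\<chi> i. if i = 1 then B else B)"
  have a1: "a $ 1 = - B" "a $ 2 = \<sigma> * c" by (auto simp: a_def)
  have b1: "b $ 1 = B" "b $ 2 = B" by (auto simp: b_def)
  have inbox: "phi \<sigma> x \<in> cbox a b" if x: "x \<in> path_image f \<union> path_image g" for x
  proof -
    have nx: "norm x \<le> B" using B[OF x] .
    have "norm (snd x) \<le> norm x" using norm_snd_le[where x="fst x" and y="snd x"] by simp
    hence h1: "\<bar>snd x\<bar> \<le> B" using nx by simp
    have "norm (fst x) \<le> norm x" using norm_fst_le[where x="fst x" and y="snd x"] by simp
    hence "\<bar>fst x\<bar> \<le> B" using nx by simp
    hence h2: "\<sigma> * fst x \<le> B" using sg by auto
    have h3: "\<sigma> * c \<le> \<sigma> * fst x" using side x by blast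
    show ?thesis unfolding mem_box_cart forall_2 a1 b1 using h1 h2 h3 by (simp add: abs_le_iff)
  qed
  let ?f = "phi \<sigma> \<circ> f" and ?g = "phi \<sigma> \<circ> g"
  have "path ?f" "path ?g" using pf pg path_continuous_image phi_cont by blast+
  moreover have "path_image ?f \<subseteq> cbox a b" "path_image ?g \<subseteq> cbox a b"
    using inbox by (auto simp: path_image_compose)
  moreover have "pathstart ?f $ 2 = a $ 2" "pathfinish ?f $ 2 = a $ 2"
     "pathstart ?g $ 2 = a $ 2" "pathfinish ?g $ 2 = a $ 2"
    using e a1 by (auto simp: pathstart_compose pathfinish_compose)
  moreover have "pathstart ?f $ 1 < pathstart ?g $ 1" "pathstart ?g $ 1 < pathfinish ?f $ 1"
     "pathfinish ?f $ 1 < pathfinish ?g $ 1"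
    using o1 o2 o3 by (auto simp: pathstart_compose pathfinish_compose)
  ultimately obtain z where z: "z \<in> path_image ?f" "z \<in> path_image ?g"
    by (rule fashoda_interlace)
  then obtain x y where "x \<in> path_image f" "y \<in> path_image g" "z = phi \<sigma> x" "z = phi \<sigma> y"
    by (auto simp: path_image_compose)
  moreover have "\<sigma> \<noteq> 0" using sg by auto
  ultimately show ?thesis using phi_inj by metis
qed

lemma seg_side:
  fixes \<sigma> c :: real and x y p :: point
  assumes "\<sigma> * c \<le> \<sigma> * fst x" "\<sigma> * c \<le> \<sigma> * fst y" "p \<in> closed_segment x y"
  shows "\<sigma> * c \<le> \<sigma> * fst p"
proof -
  obtain \<theta> where th: "0 \<le> \<theta>" "\<theta> \<le> 1" "p = (1 - \<theta>) *\<^sub>R x + \<theta> *\<^sub>R y" using seg_param[OF assms(3)] by blast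
  have "fst p = (1 - \<theta>) * fst x + \<theta> * fst y" using th by simp
  hence "\<sigma> * fst p = (1 - \<theta>) * (\<sigma> * fst x) + \<theta> * (\<sigma> * fst y)" by (simp add: algebra_simps) (metis distrib_left)
  moreover have "(1 - \<theta>) * (\<sigma> * c) \<le> (1 - \<theta>) * (\<sigma> * fst x)" using assms(1) th by (simp add: mult_left_mono)
  moreover have "\<theta> * (\<sigma> * c) \<le> \<theta> * (\<sigma> * fst y)" using assms(2) th by (simp add: mult_left_mono)
  ultimately show ?thesis by (simp add: algebra_simps)
qed

lemma seg_snd:
  fixes x y p :: point
  assumes "p \<in> closed_segment x y" "snd x = Y" "snd y = Y" shows "snd p = Y"
proof -
  obtain \<theta> where th: "p = (1 - \<theta>) *\<^sub>R x + \<theta> *\<^sub>R y" using seg_param[OF assms(1)] by blast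
  have "snd p = (1 - \<theta>) * snd x + \<theta> * snd y" using th by simp
  thus ?thesis using assms by (simp add: algebra_simps)
qed

lemma hit3:
  fixes A :: "real \<Rightarrow> point"
  assumes pA: "path A" and sg: "\<sigma> = 1 \<or> \<sigma> = -1"
    and sideA: "\<forall>x\<in>path_image A. \<sigma> * c \<le> \<sigma> * fst x"
    and As: "fst (pathstart A) = c" and Af: "fst (pathfinish A) = c"
    and q: "fst q = c" "min (snd (pathstart A)) (snd (pathfinish A)) < snd q" "snd q < max (snd (pathstart A)) (snd (pathfinish A))"
    and v: "\<sigma> * c \<le> \<sigma> * fst v"
    and Y: "(\<forall>x\<in>path_image A. snd x < Y) \<or> (\<forall>x\<in>path_image A. Y < snd x)"
  shows "\<exists>p\<in>path_image A. p \<in> closed_segment q v \<or> p \<in> closed_segment v (fst v, Y)"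
proof -
  define g where "g = linepath q v +++ linepath v (fst v, Y) +++ linepath (fst v, Y) (c, Y)"
  have pg: "path g" unfolding g_def by (intro path_join_imp) auto
  have pig: "path_image g = closed_segment q v \<union> closed_segment v (fst v, Y) \<union> closed_segment (fst v, Y) (c, Y)"
    unfolding g_def by (simp add: path_image_join Un_assoc)
  have gs: "pathstart g = q" and gf: "pathfinish g = (c, Y)" by (simp_all add: g_def)
  have sq: "\<sigma> * c \<le> \<sigma> * fst q" using q by simp
  have sv2: "\<sigma> * c \<le> \<sigma> * fst (fst v, Y)" using v by simp
  have sc: "\<sigma> * c \<le> \<sigma> * fst (c, Y)" by simp
  have sideg: "\<forall>x\<in>path_image g. \<sigma> * c \<le> \<sigma> * fst x"
  proof
    fix x assume "x \<in> path_image g"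
    hence "x \<in> closed_segment q v \<or> x \<in> closed_segment v (fst v, Y) \<or> x \<in> closed_segment (fst v, Y) (c, Y)"
      unfolding pig by blast
    thus "\<sigma> * c \<le> \<sigma> * fst x"
      using seg_side[OF sq v, of x] seg_side[OF v sv2, of x] seg_side[OF sv2 sc, of x] by blast
  qed
  define A' where "A' = (if snd (pathstart A) < snd (pathfinish A) then A else reversepath A)"
  have pA': "path A'" using pA by (simp add: A'_def)
  have piA': "path_image A' = path_image A" by (simp add: A'_def path_image_reversepath)
  have A's: "snd (pathstart A') = min (snd (pathstart A)) (snd (pathfinish A))"
    and A'f: "snd (pathfinish A') = max (snd (pathstart A)) (snd (pathfinish A))"
    using q by (auto simp: A'_def min_def max_def)
  have A'sf: "fst (pathstart A') = c" "fst (pathfinish A') = c" using As Af by (auto simp: A'_def)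
  have inA: "pathstart A \<in> path_image A" "pathfinish A \<in> path_image A" by auto
  obtain z where z: "z \<in> path_image A" "z \<in> path_image g"
  proof (cases "\<forall>x\<in>path_image A. snd x < Y")
    case True
    have "\<exists>z. z \<in> path_image A' \<and> z \<in> path_image g"
    proof (rule hit[OF pA' pg sg])
      show "\<forall>x\<in>path_image A' \<union> path_image g. \<sigma> * c \<le> \<sigma> * fst x" using sideA sideg piA' by blast
      show "fst (pathstart A') = c" "fst (pathfinish A') = c" using A'sf by auto
      show "fst (pathstart g) = c" "fst (pathfinish g) = c" using gs gf q by auto
      show "snd (pathstart A') < snd (pathstart g)" "snd (pathstart g) < snd (pathfinish A')"
        using A's A'f q gs by auto
      show "snd (pathfinish A') < snd (pathfinish g)" using A'f gf True inA by auto
    qed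
    then obtain z0 where "z0 \<in> path_image A'" "z0 \<in> path_image g" by blast
    thus ?thesis using that[of z0] piA' by blast
  next
    case False
    hence Yb: "\<forall>x\<in>path_image A. Y < snd x" using Y by blast
    have "\<exists>z. z \<in> path_image (reversepath g) \<and> z \<in> path_image A'"
    proof (rule hit[OF _ pA' sg])
      show "path (reversepath g)" using pg by simp
      show "\<forall>x\<in>path_image (reversepath g) \<union> path_image A'. \<sigma> * c \<le> \<sigma> * fst x"
        using sideA sideg piA' by (auto simp: path_image_reversepath)
      show "fst (pathstart A') = c" "fst (pathfinish A') = c" using A'sf by auto
      show "fst (pathstart (reversepath g)) = c" "fst (pathfinish (reversepath g)) = c" using gs gf q by auto
      show "snd (pathstart (reversepath g)) < snd (pathstart A')" using A's gf Yb inA by auto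
      show "snd (pathstart A') < snd (pathfinish (reversepath g))"
        "snd (pathfinish (reversepath g)) < snd (pathfinish A')"
        using A's A'f q gs by auto
    qed
    then obtain z0 where "z0 \<in> path_image (reversepath g)" "z0 \<in> path_image A'" by blast
    thus ?thesis using that[of z0] piA' by (simp add: path_image_reversepath)
  qed
  have "z \<notin> closed_segment (fst v, Y) (c, Y)"
  proof
    assume "z \<in> closed_segment (fst v, Y) (c, Y)"
    hence "snd z = Y" by (rule seg_snd) auto
    thus False using Y z by auto
  qed
  thus ?thesis using z pig by blast
qed

lemma nonvert:
  fixes x y w w' :: point
  assumes "fst x \<noteq> fst y" "w \<in> closed_segment x y" "w' \<in> closed_segment x y" "fst w = fst w'"
  shows "w = w'"
proof -
  obtain \<theta> where th: "w = (1 - \<theta>) *\<^sub>R x + \<theta> *\<^sub>R y" using seg_param[OF assms(2)] by blast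
  obtain \<theta>' where th': "w' = (1 - \<theta>') *\<^sub>R x + \<theta>' *\<^sub>R y" using seg_param[OF assms(3)] by blast
  have "fst w = (1 - \<theta>) * fst x + \<theta> * fst y" "fst w' = (1 - \<theta>') * fst x + \<theta>' * fst y"
    using th th' by simp_all
  hence "fst w = fst x + \<theta> * (fst y - fst x)" "fst w' = fst x + \<theta>' * (fst y - fst x)"
    by (simp_all add: algebra_simps)
  hence "\<theta> = \<theta>'" using assms(1,4) by simp
  thus ?thesis using th th' by simp
qed

lemma cover:
  fixes ylo y yhi s :: real
  assumes "ylo \<le> y" "y \<le> yhi" "yhi - ylo \<le> 1" "s \<le> y" "y \<le> s + 1"
  shows "(s \<le> ylo \<and> ylo \<le> s + 1) \<or> (s \<le> yhi \<and> yhi \<le> s + 1)"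
  using assms by linarith

lemma par:
  fixes x D :: point
  assumes "cross x D = 0" "D \<noteq> 0" shows "\<exists>\<kappa>. x = \<kappa> *\<^sub>R D"
proof (cases "fst D = 0")
  case True
  hence "snd D \<noteq> 0" using assms(2) by (simp add: prod_eq_iff)
  moreover have "fst x * snd D = 0" using assms(1) True by (simp add: cross_def)
  ultimately have "fst x = 0" by simp
  thus ?thesis using True \<open>snd D \<noteq> 0\<close> by (intro exI[of _ "snd x / snd D"]) (simp add: prod_eq_iff)
next
  case False
  have "fst x * snd D = snd x * fst D" using assms(1) by (simp add: cross_def)
  hence "snd x = fst x / fst D * snd D" using False by (simp add: field_simps)
  thus ?thesis using False by (intro exI[of _ "fst x / fst D"]) (simp add: prod_eq_iff)
qed

locale L =
  fixes P :: "point set" and ps :: "point list" and \<tau> :: nat and c a b :: real and p1 p2 q :: point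
  assumes inst: "seg_instance P"
    and tour: "is_tour P ps"
    and opt: "\<forall>qs. is_tour P qs \<longrightarrow> cost ps \<le> cost qs"
    and nsc: "non_self_crossing ps"
    and p12: "p1 \<noteq> p2"
    and on1: "fst p1 = c" and on2: "fst p2 = c"
    and ab: "a \<le> b"
    and ca: "curve ps a = p1" and cb: "curve ps b = p2"
    and L1_strip: "curve ps ` {a..b} \<subseteq> strip P \<tau>"
    and L1_nocross: "\<forall>t\<in>{a<..<b}. fst (curve ps t) \<noteq> c"
    and qseg: "q \<in> open_segment p1 p2"
    and qr: "q \<in> range (curve ps)"
begin

abbreviation "n \<equiv> length ps"
abbreviation "L1 \<equiv> curve ps ` {a..b}"

lemma inj: "inj_on fst P" using inst by (simp add: seg_instance_def)
lemma ne: "ps \<noteq> []" using tour by (simp add: is_tour_def)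
lemma dst: "distinct ps" using tour_distinct[OF tour] .
lemma n0: "n > 0" using ne by simp

lemma n2: "n \<ge> 2"
proof (rule ccontr)
  assume "\<not> n \<ge> 2"
  hence n1: "n = 1" using n0 by linarith
  have "curve ps t = ps ! 0" for t using n1 by (simp add: curve_def Let_def algebra_simps)
  thus False using ca cb p12 by metis
qed

lemma nth_inj: "i < n \<Longrightarrow> j < n \<Longrightarrow> ps ! i = ps ! j \<Longrightarrow> i = j"
  using dst by (simp add: nth_eq_iff_index_eq)

lemma fst_inj: "i < n \<Longrightarrow> j < n \<Longrightarrow> fst (ps ! i) = fst (ps ! j) \<Longrightarrow> i = j"
  using tour_fst_inj[OF inj tour] nth_inj by (meson nth_mem)

lemma nx_ne: "k < n \<Longrightarrow> nx n k \<noteq> k"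
proof (cases "k + 1 < n")
  case True thus ?thesis by (simp add: nx_def)
next
  case False assume "k < n"
  hence "k + 1 = n" using False by simp
  thus ?thesis using n2 by (simp add: nx_def)
qed

lemma pv_ne: "k < n \<Longrightarrow> pv n k \<noteq> k"
  using nx_ne nx_pv n0 pv_lt by metis

lemma leg_fst: "j < n \<Longrightarrow> fst (ps ! j) \<noteq> fst (nxt ps j)"
  using fst_inj nx_ne nx_lt n0 by (metis nxt_nx)

lemma leg_ne: "j < n \<Longrightarrow> ps ! j \<noteq> nxt ps j"
  using leg_fst by metis

lemma vert_on_seg: "p \<in> set ps \<Longrightarrow> \<exists>b\<in>P. p \<in> vseg b"
  using tour by (simp add: is_tour_def)

lemma ab_lt: "a < b" using ab ca cb p12 by (cases "a = b") auto

lemma curve_cont': "continuous_on S (curve ps)"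
  using curve_cont[OF ne] continuous_on_subset by blast

lemma L1_compact: "compact L1"
  by (intro compact_continuous_image curve_cont') simp

lemma L1_Gamma: "x \<in> L1 \<Longrightarrow> fst x = c \<Longrightarrow> x = p1 \<or> x = p2"
proof -
  assume "x \<in> L1" "fst x = c"
  then obtain t where t: "t \<in> {a..b}" "x = curve ps t" by blast
  hence "t = a \<or> t = b" using L1_nocross \<open>fst x = c\<close> by force
  thus ?thesis using t ca cb by blast
qed

lemma q_props: "fst q = c" "q \<noteq> p1" "q \<noteq> p2" "q \<notin> L1"
  "min (snd p1) (snd p2) < snd q" "snd q < max (snd p1) (snd p2)"
proof -
  have qc: "q \<in> closed_segment p1 p2" "q \<noteq> p1" "q \<noteq> p2" using qseg by (auto simp: open_segment_def)
  then obtain \<theta> where th: "0 \<le> \<theta>" "\<theta> \<le> 1" "q = (1 - \<theta>) *\<^sub>R p1 + \<theta> *\<^sub>R p2" using seg_param by blast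
  have t0: "\<theta> \<noteq> 0" using th qc by auto
  have t1: "\<theta> \<noteq> 1" using th qc by auto
  have "fst q = (1 - \<theta>) * fst p1 + \<theta> * fst p2" using th by simp
  thus fq: "fst q = c" using on1 on2 by (simp add: algebra_simps)
  show "q \<noteq> p1" "q \<noteq> p2" using qc by auto
  show "q \<notin> L1" using L1_Gamma fq qc by blast
  have sn: "snd p1 \<noteq> snd p2" using p12 on1 on2 by (simp add: prod_eq_iff)
  have "snd q = (1 - \<theta>) * snd p1 + \<theta> * snd p2" using th by simp
  hence sq: "snd q = snd p1 + \<theta> * (snd p2 - snd p1)" by (simp add: algebra_simps)
  have "0 < \<theta>" "\<theta> < 1" using th t0 t1 by auto
  define d where "d = snd p2 - snd p1"
  have "(0 < \<theta> * d \<and> \<theta> * d < d) \<or> (d < \<theta> * d \<and> \<theta> * d < 0)"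
  proof (cases "d > 0")
    case True
    have "\<theta> * d < 1 * d" using \<open>\<theta> < 1\<close> True by (intro mult_strict_right_mono) auto
    thus ?thesis using True \<open>0 < \<theta>\<close> by simp
  next
    case False
    hence "d < 0" using sn d_def by simp
    have "1 * d < \<theta> * d" using \<open>\<theta> < 1\<close> \<open>d < 0\<close> by (intro mult_strict_right_mono_neg) auto
    thus ?thesis using \<open>d < 0\<close> \<open>0 < \<theta>\<close> by (simp add: mult_pos_neg)
  qed
  note H = this
  have sq': "snd q = snd p1 + \<theta> * d" using sq d_def by simp
  show "min (snd p1) (snd p2) < snd q" "snd q < max (snd p1) (snd p2)"
  proof -
    show "min (snd p1) (snd p2) < snd q"
    proof (cases "snd p1 \<le> snd p2")
      case True hence "min (snd p1) (snd p2) = snd p1" by simp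
      thus ?thesis using H sq' d_def True by linarith
    next
      case False hence "min (snd p1) (snd p2) = snd p2" by simp
      thus ?thesis using H sq' d_def False by linarith
    qed
    show "snd q < max (snd p1) (snd p2)"
    proof (cases "snd p1 \<le> snd p2")
      case True hence "max (snd p1) (snd p2) = snd p2" by simp
      thus ?thesis using H sq' d_def True by linarith
    next
      case False hence "max (snd p1) (snd p2) = snd p1" by simp
      thus ?thesis using H sq' d_def False by linarith
    qed
  qed
qed

lemma strip_height: "x \<in> L1 \<Longrightarrow> y \<in> L1 \<Longrightarrow> snd x - snd y \<le> 1"
proof -
  assume "x \<in> L1" "y \<in> L1"
  hence "snd x \<le> cover_y P \<tau>" "cover_y P (\<tau> + 1) \<le> snd y" using L1_strip by (auto simp: strip_def)
  moreover have "cover_y P \<tau> - cover_y P (\<tau> + 1) = 1" by (simp add: cover_y_def)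
  ultimately show ?thesis by linarith
qed

definition A :: "real \<Rightarrow> point" where "A = curve ps \<circ> linepath a b"

lemma A_path: "path A"
  unfolding A_def path_def by (intro continuous_on_compose) (auto intro!: continuous_intros curve_cont')

lemma A_image: "path_image A = L1"
  using ab by (simp add: A_def path_image_compose closed_segment_eq_real_ivl)

lemma A_start: "pathstart A = p1" and A_finish: "pathfinish A = p2"
  using ca cb by (simp_all add: A_def pathstart_compose pathfinish_compose)

lemma side_exists: "\<exists>\<sigma>. (\<sigma> = 1 \<or> \<sigma> = -1) \<and> (\<forall>t\<in>{a<..<b}. \<sigma> * c < \<sigma> * fst (curve ps t))"
proof -
  define h where "h t = fst (curve ps t) - c" for t
  have hc: "continuous_on S h" for S unfolding h_def by (intro continuous_intros curve_cont')
  define m where "m = (a + b) / 2"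
  have m: "m \<in> {a<..<b}" using ab_lt by (simp add: m_def)
  have hm: "h m \<noteq> 0" using L1_nocross m by (simp add: h_def)
  define \<sigma> :: real where "\<sigma> = (if h m > 0 then 1 else -1)"
  have "\<forall>t\<in>{a<..<b}. \<sigma> * h t > 0"
  proof
    fix t assume t: "t \<in> {a<..<b}"
    have ht: "h t \<noteq> 0" using L1_nocross t by (simp add: h_def)
    show "\<sigma> * h t > 0"
    proof (rule ccontr)
      assume "\<not> \<sigma> * h t > 0"
      hence opp: "(h t < 0 \<and> h m > 0) \<or> (h t > 0 \<and> h m < 0)" using ht hm by (auto simp: \<sigma>_def split: if_splits)
      have "\<exists>x. min t m \<le> x \<and> x \<le> max t m \<and> h x = 0"
      proof (cases "t \<le> m")
        case True
        thus ?thesis using opp IVT'[of h t 0 m, OF _ _ True hc] IVT2'[of h m 0 t, OF _ _ True hc]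
          by (auto simp: min_def max_def)
      next
        case False
        hence "m \<le> t" by simp
        thus ?thesis using opp IVT'[of h m 0 t, OF _ _ \<open>m \<le> t\<close> hc] IVT2'[of h t 0 m, OF _ _ \<open>m \<le> t\<close> hc] False
          by (auto simp: min_def max_def)
      qed
      then obtain x where x: "min t m \<le> x" "x \<le> max t m" "h x = 0" by blast
      have "x \<in> {a<..<b}" using x t m by auto
      thus False using L1_nocross x by (simp add: h_def)
    qed
  qed
  thus ?thesis by (intro exI[of _ \<sigma>]) (auto simp: \<sigma>_def h_def algebra_simps)
qed

end

definition stp :: "bool \<Rightarrow> nat \<Rightarrow> nat \<Rightarrow> nat" where "stp fw n = (if fw then nx n else pv n)"
definition bkp :: "bool \<Rightarrow> nat \<Rightarrow> nat \<Rightarrow> nat" where "bkp fw n = (if fw then pv n else nx n)"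

lemma bk_st: "n > 0 \<Longrightarrow> k < n \<Longrightarrow> bkp fw n (stp fw n k) = k"
  by (auto simp: stp_def bkp_def pv_nx nx_pv)
lemma st_lt: "n > 0 \<Longrightarrow> stp fw n k < n" by (auto simp: stp_def nx_lt pv_lt)
lemma bk_lt: "n > 0 \<Longrightarrow> bkp fw n k < n" by (auto simp: bkp_def nx_lt pv_lt)

lemma nx_pow: "k < n \<Longrightarrow> (nx n ^^ r) k = (k + r) mod n"
  by (induction r) (auto simp: nx_def mod_Suc_eq)

lemma pv_pow: "k < n \<Longrightarrow> (pv n ^^ r) k = (k + r * (n - 1)) mod n"
proof (induction r)
  case 0 thus ?case by simp
next
  case (Suc r)
  have n1: "n \<ge> 1" using Suc.prems by simp
  have "(pv n ^^ Suc r) k = pv n ((pv n ^^ r) k)" by simp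
  also have "\<dots> = pv n ((k + r * (n - 1)) mod n)" using Suc by simp
  also have "\<dots> = ((k + r * (n - 1)) mod n + (n - 1)) mod n" using n1 by (simp add: pv_def)
  also have "\<dots> = ((k + r * (n - 1)) + (n - 1)) mod n" by (simp add: mod_add_left_eq)
  finally show ?case by (simp only: mult_Suc ac_simps)
qed

lemma st_pow_n: "k < n \<Longrightarrow> (stp fw n ^^ n) k = k"
proof (cases fw)
  case True assume "k < n" thus ?thesis using True by (simp add: stp_def nx_pow)
next
  case False assume k: "k < n"
  have "(k + n * (n - 1)) mod n = k" using k by simp
  thus ?thesis using False k by (simp add: stp_def pv_pow)
qed

lemma seg_vert:
  fixes v p :: point
  assumes "p \<in> closed_segment v (fst v, Y)"
  shows "fst p = fst v" "snd v \<le> Y \<Longrightarrow> snd v \<le> snd p" "Y \<le> snd v \<Longrightarrow> snd p \<le> snd v"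
proof -
  obtain \<theta> where th: "0 \<le> \<theta>" "\<theta> \<le> 1" "p = (1 - \<theta>) *\<^sub>R v + \<theta> *\<^sub>R (fst v, Y)" using seg_param[OF assms] by blast
  have f: "fst p = (1 - \<theta>) * fst v + \<theta> * fst v" and s: "snd p = (1 - \<theta>) * snd v + \<theta> * Y" using th by simp_all
  show "fst p = fst v" using f by (simp add: algebra_simps)
  have s': "snd p = snd v + \<theta> * (Y - snd v)" using s by (simp add: algebra_simps)
  show "snd v \<le> Y \<Longrightarrow> snd v \<le> snd p" using s' th by simp
  show "Y \<le> snd v \<Longrightarrow> snd p \<le> snd v" using s' th by (simp add: mult_nonneg_nonpos)
qed

lemma seg_ray:
  fixes q D p :: point
  assumes "p \<in> closed_segment q (q + s *\<^sub>R D)"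
  shows "\<exists>\<theta>. 0 \<le> \<theta> \<and> \<theta> \<le> 1 \<and> p = q + (\<theta> * s) *\<^sub>R D"
proof -
  obtain \<theta> where th: "0 \<le> \<theta>" "\<theta> \<le> 1" "p = (1 - \<theta>) *\<^sub>R q + \<theta> *\<^sub>R (q + s *\<^sub>R D)" using seg_param[OF assms] by blast
  have "p = q + (\<theta> * s) *\<^sub>R D" using th(3) by (simp add: algebra_simps)
  thus ?thesis using th by blast
qed

locale L2 = L +
  fixes \<sigma> :: real and fw :: bool and k1 :: nat and D :: point and ts :: real and lam :: real
  assumes sg: "\<sigma> = 1 \<or> \<sigma> = -1"
    and side: "\<forall>t\<in>{a<..<b}. \<sigma> * c < \<sigma> * fst (curve ps t)"
    and sD: "\<sigma> * fst D > 0"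
    and k1: "k1 < n"
    and W0: "ps ! k1 = q + D"
    and Wm: "ps ! (bkp fw n k1) = q + lam *\<^sub>R D" and lam: "lam \<le> 0"
    and ts: "0 < ts" and z_in: "q + ts *\<^sub>R D \<in> L1"
    and tmin: "\<forall>\<tau>. 0 \<le> \<tau> \<longrightarrow> \<tau> < ts \<longrightarrow> q + \<tau> *\<^sub>R D \<notin> L1"
begin

lemma D0: "D \<noteq> 0" using sD by auto

lemma sideL: "x \<in> L1 \<Longrightarrow> \<sigma> * c \<le> \<sigma> * fst x"
proof -
  assume "x \<in> L1"
  then obtain t where t: "t \<in> {a..b}" "x = curve ps t" by blast
  show ?thesis
  proof (cases "t = a \<or> t = b")
    case True thus ?thesis using t ca cb on1 on2 by auto
  next
    case False thus ?thesis using t side by (auto intro: less_imp_le)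
  qed
qed

lemma sideA: "\<forall>x\<in>path_image A. \<sigma> * c \<le> \<sigma> * fst x" using sideL A_image by simp

lemma ray_side: "0 < s \<Longrightarrow> \<sigma> * c < \<sigma> * fst (q + s *\<^sub>R D)"
proof -
  assume s: "0 < s"
  have "\<sigma> * fst (q + s *\<^sub>R D) = \<sigma> * c + s * (\<sigma> * fst D)" using q_props(1) by (simp add: algebra_simps)
  thus ?thesis using s sD by (simp add: mult_pos_pos)
qed

lemma L1_bounded: "\<exists>B. \<forall>x\<in>L1. norm x \<le> B"
  using compact_imp_bounded[OF L1_compact] by (meson bounded_iff)

lemma hit_vert:
  assumes v: "v = q + s *\<^sub>R D" "0 < s" "s < ts"
  shows "\<exists>p\<in>L1. fst p = fst v \<and> snd v \<le> snd p" "\<exists>p\<in>L1. fst p = fst v \<and> snd p \<le> snd v"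
proof -
  obtain B where B: "\<forall>x\<in>L1. norm x \<le> B" using L1_bounded by blast
  have sndB: "\<bar>snd x\<bar> \<le> B" if "x \<in> L1" for x
  proof -
    have "norm (snd x) \<le> norm x" using norm_snd_le[where x="fst x" and y="snd x"] by simp
    moreover have "norm x \<le> B" using B that by blast
    ultimately show ?thesis by (simp add: real_norm_def)
  qed
  have sv: "\<sigma> * c \<le> \<sigma> * fst v" using ray_side[OF v(2)] v(1) by simp
  have qA: "fst q = c" "min (snd (pathstart A)) (snd (pathfinish A)) < snd q" "snd q < max (snd (pathstart A)) (snd (pathfinish A))"
    using q_props A_start A_finish by auto
  have As: "fst (pathstart A) = c" "fst (pathfinish A) = c" using A_start A_finish on1 on2 by auto
  have noseg: "p \<notin> closed_segment q v" if "p \<in> L1" for p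
  proof
    assume "p \<in> closed_segment q v"
    then obtain \<theta> where "0 \<le> \<theta>" "\<theta> \<le> 1" "p = q + (\<theta> * s) *\<^sub>R D" using seg_ray v(1) by blast
    moreover have "\<theta> * s < ts" using \<open>\<theta> \<le> 1\<close> v \<open>0 \<le> \<theta>\<close> by (meson le_less_trans mult_left_le_one_le less_imp_le)
    ultimately show False using tmin that v(2) by auto
  qed
  define Yu where "Yu = max B (snd v) + 1"
  have "\<forall>x\<in>path_image A. snd x < Yu" using sndB A_image by (fastforce simp: Yu_def)
  then obtain p where p: "p \<in> path_image A" "p \<in> closed_segment q v \<or> p \<in> closed_segment v (fst v, Yu)"
    using hit3[OF A_path sg sideA As qA sv] by blast
  hence "p \<in> closed_segment v (fst v, Yu)" using noseg A_image by blast
  hence "fst p = fst v" "snd v \<le> snd p" using seg_vert[of p v Yu] by (auto simp: Yu_def)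
  thus "\<exists>p\<in>L1. fst p = fst v \<and> snd v \<le> snd p" using p A_image by blast
  define Yd where "Yd = min (-B) (snd v) - 1"
  have "\<forall>x\<in>path_image A. Yd < snd x" using sndB A_image by (fastforce simp: Yd_def)
  then obtain p' where p': "p' \<in> path_image A" "p' \<in> closed_segment q v \<or> p' \<in> closed_segment v (fst v, Yd)"
    using hit3[OF A_path sg sideA As qA sv] by blast
  hence "p' \<in> closed_segment v (fst v, Yd)" using noseg A_image by blast
  hence "fst p' = fst v" "snd p' \<le> snd v" using seg_vert[of p' v Yd] by (auto simp: Yd_def)
  thus "\<exists>p\<in>L1. fst p = fst v \<and> snd p \<le> snd v" using p' A_image by blast
qed

lemma L1_leg: "x \<in> L1 \<Longrightarrow> \<exists>j<n. x \<in> closed_segment (ps ! j) (nxt ps j)"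
  using curve_leg[OF ne] idx_lt[OF ne] by blast

lemma ST:
  assumes k: "k < n" and v: "ps ! k = q + s *\<^sub>R D" "0 < s" "s < ts"
  shows "ps ! k \<in> closed_segment (ps ! pv n k) (ps ! nx n k)"
proof -
  obtain pu where pu: "pu \<in> L1" "fst pu = fst (ps ! k)" "snd (ps ! k) \<le> snd pu" using hit_vert(1)[OF v] by blast
  obtain pd where pd: "pd \<in> L1" "fst pd = fst (ps ! k)" "snd pd \<le> snd (ps ! k)" using hit_vert(2)[OF v] by blast
  obtain bb where bb: "bb \<in> P" "ps ! k \<in> vseg bb" using vert_on_seg k by (meson nth_mem)
  have "snd pu - snd pd \<le> 1" using strip_height pu pd by blast
  hence "(snd bb \<le> snd pd \<and> snd pd \<le> snd bb + 1) \<or> (snd bb \<le> snd pu \<and> snd pu \<le> snd bb + 1)"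
    using cover[of "snd pd" "snd (ps ! k)" "snd pu" "snd bb"] pu pd bb vseg_iff by blast
  then obtain w where w: "w \<in> L1" "w \<in> vseg bb" using pu pd bb vseg_iff by metis
  have vnL: "ps ! k \<notin> L1" using tmin v by auto
  obtain j where j: "j < n" "w \<in> closed_segment (ps ! j) (nxt ps j)" using L1_leg w by blast
  have fw': "fst w = fst (ps ! k)" using w bb vseg_fst by metis
  have "ps ! k \<noteq> ps ! j"
  proof
    assume e: "ps ! k = ps ! j"
    have "w = ps ! j" using nonvert[OF leg_fst[OF j(1)] j(2), of "ps ! j"] fw' e by simp
    thus False using w vnL e by simp
  qed
  moreover have "ps ! k \<noteq> nxt ps j"
  proof
    assume e: "ps ! k = nxt ps j"
    have "w = nxt ps j" using nonvert[OF leg_fst[OF j(1)] j(2), of "nxt ps j"] fw' e by simp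
    thus False using w vnL e by simp
  qed
  ultimately show ?thesis using reloc[OF inj tour opt k j(1) j(2) _ _ bb(1,2) w(2)] by blast
qed

end

lemma step_param:
  fixes q D u v w :: point
  assumes u: "u = q + s' *\<^sub>R D" and v: "v = q + s *\<^sub>R D" and ss: "s' < s"
    and vw: "v \<in> closed_segment u w" "v \<noteq> w" and D: "D \<noteq> 0"
  shows "\<exists>s''>s. w = q + s'' *\<^sub>R D"
proof -
  obtain \<theta> where th: "0 \<le> \<theta>" "\<theta> \<le> 1" "v = (1 - \<theta>) *\<^sub>R u + \<theta> *\<^sub>R w" using seg_param[OF vw(1)] by blast
  have "u \<noteq> v" using u v ss D by (auto simp: algebra_simps)
  hence t0: "\<theta> \<noteq> 0" using th by auto
  have "v - u = \<theta> *\<^sub>R (w - u)" using th by (simp add: algebra_simps)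
  hence "(1 / \<theta>) *\<^sub>R (v - u) = w - u" using t0 by simp
  hence "w = u + (1 / \<theta>) *\<^sub>R (v - u)" by (metis add.commute diff_add_cancel)
  hence w: "w = q + (s' + (s - s') / \<theta>) *\<^sub>R D" using u v by (simp add: algebra_simps scaleR_diff_right diff_divide_distrib scaleR_diff_left)
  have "(s - s') / \<theta> \<ge> s - s'" using th t0 ss by (simp add: le_divide_eq mult_left_le_one_le)
  moreover have "s' + (s - s') / \<theta> \<noteq> s" using w v vw(2) by auto
  ultimately have "s' + (s - s') / \<theta> > s" by linarith
  thus ?thesis using w by blast
qed

context L2
begin

definition idx :: "nat \<Rightarrow> nat" where "idx r = (stp fw n ^^ r) k1"

lemma idx_bound: "idx r < n"
  by (induction r) (simp_all add: idx_def k1 st_lt[OF n0])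

lemma idx_Suc: "idx (Suc r) = stp fw n (idx r)" by (simp add: idx_def)

lemma bk_idx_Suc: "bkp fw n (idx (Suc r)) = idx r"
  using idx_Suc bk_st n0 idx_bound by simp

lemma idx_n: "idx n = k1" using st_pow_n k1 by (simp add: idx_def)

lemma ST': "k < n \<Longrightarrow> ps ! k = q + s *\<^sub>R D \<Longrightarrow> 0 < s \<Longrightarrow> s < ts \<Longrightarrow>
    ps ! k \<in> closed_segment (ps ! bkp fw n k) (ps ! stp fw n k)"
  using ST by (cases fw) (auto simp: bkp_def stp_def closed_segment_commute)

lemma st_ne: "k < n \<Longrightarrow> stp fw n k \<noteq> k" using nx_ne pv_ne by (simp add: stp_def)

lemma walk:
  "(\<exists>m\<le>r. \<exists>s' s. ps ! bkp fw n (idx m) = q + s' *\<^sub>R D \<and> ps ! idx m = q + s *\<^sub>R D \<and> s' < ts \<and> ts \<le> s)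
   \<or> (\<exists>s' s. ps ! bkp fw n (idx r) = q + s' *\<^sub>R D \<and> ps ! idx r = q + s *\<^sub>R D \<and> s' < s \<and> 1 \<le> s \<and> s < ts \<and> (0 < r \<longrightarrow> 1 < s))"
proof (induction r)
  case 0
  have i0: "idx 0 = k1" by (simp add: idx_def)
  show ?case
  proof (cases "ts \<le> 1")
    case True
    have "ps ! bkp fw n (idx 0) = q + lam *\<^sub>R D \<and> ps ! idx 0 = q + 1 *\<^sub>R D \<and> lam < ts \<and> ts \<le> 1"
      using Wm W0 lam ts i0 True by auto
    thus ?thesis by blast
  next
    case False
    have "ps ! bkp fw n (idx 0) = q + lam *\<^sub>R D \<and> ps ! idx 0 = q + 1 *\<^sub>R D \<and> lam < 1 \<and> 1 \<le> (1::real) \<and> 1 < ts"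
      using Wm W0 lam i0 False by auto
    thus ?thesis by blast
  qed
next
  case (Suc r)
  show ?case
  proof (cases "\<exists>m\<le>r. \<exists>s' s. ps ! bkp fw n (idx m) = q + s' *\<^sub>R D \<and> ps ! idx m = q + s *\<^sub>R D \<and> s' < ts \<and> ts \<le> s")
    case True
    then obtain m where "m \<le> r" "\<exists>s' s. ps ! bkp fw n (idx m) = q + s' *\<^sub>R D \<and> ps ! idx m = q + s *\<^sub>R D \<and> s' < ts \<and> ts \<le> s" by blast
    hence "m \<le> Suc r" by simp
    thus ?thesis using \<open>\<exists>s' s. _\<close> by blast
  next
    case False
    then obtain s' s where ih: "ps ! bkp fw n (idx r) = q + s' *\<^sub>R D" "ps ! idx r = q + s *\<^sub>R D" "s' < s" "1 \<le> s" "s < ts"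
      "0 < r \<longrightarrow> 1 < s" using Suc.IH by blast
    have sg0: "0 < s" using ih by simp
    have seg: "ps ! idx r \<in> closed_segment (ps ! bkp fw n (idx r)) (ps ! stp fw n (idx r))"
      using ST'[OF idx_bound ih(2) sg0 ih(5)] .
    have ne': "ps ! idx r \<noteq> ps ! stp fw n (idx r)"
      using st_ne[OF idx_bound] nth_inj idx_bound st_lt n0 by metis
    obtain s'' where s'': "s'' > s" "ps ! stp fw n (idx r) = q + s'' *\<^sub>R D"
      using step_param[OF ih(1) ih(2) ih(3) seg ne' D0] by blast
    have W: "ps ! idx (Suc r) = q + s'' *\<^sub>R D" using s'' idx_Suc by simp
    have B: "ps ! bkp fw n (idx (Suc r)) = q + s *\<^sub>R D" using bk_idx_Suc ih(2) by simp
    show ?thesis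
    proof (cases "ts \<le> s''")
      case True
      thus ?thesis using W B ih(5) by (intro disjI1 exI[of _ "Suc r"]) auto
    next
      case False
      thus ?thesis using W B s'' ih by (intro disjI2 exI[of _ s] exI[of _ s'']) auto
    qed
  qed
qed

lemma exit_exists:
  "\<exists>m s' s. ps ! bkp fw n (idx m) = q + s' *\<^sub>R D \<and> ps ! idx m = q + s *\<^sub>R D \<and> s' < ts \<and> ts \<le> s"
proof -
  have "\<not> (\<exists>s' s. ps ! bkp fw n (idx n) = q + s' *\<^sub>R D \<and> ps ! idx n = q + s *\<^sub>R D \<and> s' < s \<and> 1 \<le> s \<and> s < ts \<and> (0 < n \<longrightarrow> 1 < s))"
  proof
    assume "\<exists>s' s. ps ! bkp fw n (idx n) = q + s' *\<^sub>R D \<and> ps ! idx n = q + s *\<^sub>R D \<and> s' < s \<and> 1 \<le> s \<and> s < ts \<and> (0 < n \<longrightarrow> 1 < s)"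
    then obtain s where s: "ps ! idx n = q + s *\<^sub>R D" "1 < s" using n0 by blast
    hence "q + s *\<^sub>R D = q + D" using idx_n W0 by simp
    hence "(s - 1) *\<^sub>R D = 0" by (simp add: algebra_simps)
    thus False using s D0 by simp
  qed
  thus ?thesis using walk[of n] by blast
qed

end

lemma col:
  fixes q D x y z :: point
  assumes zs: "z \<in> closed_segment x y" and z: "z = q + t *\<^sub>R D" and x: "x = q + t' *\<^sub>R D"
    and tt: "t' \<noteq> t" and D: "D \<noteq> 0"
  shows "\<exists>\<kappa>. y - x = \<kappa> *\<^sub>R D"
proof -
  have c0: "cross (x - z) (y - z) = 0" by (rule cross_collinear[OF zs])
  have "x - z = (t' - t) *\<^sub>R D" using x z by (simp add: algebra_simps)
  hence "(t' - t) * cross D (y - z) = 0" using c0 cross_scale[of "t' - t" D 1 "y - z"] by simp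
  hence "cross D (y - z) = 0" using tt by simp
  hence "cross (y - z) D = 0" using cross_swap by (metis neg_equal_0_iff_equal)
  then obtain \<kappa> where "y - z = \<kappa> *\<^sub>R D" using par D by blast
  hence "y - x = (\<kappa> + t - t') *\<^sub>R D" using x z by (simp add: algebra_simps)
  thus ?thesis by blast
qed

lemma inter1:
  fixes x1 y1 x2 y2 z :: point
  assumes z1: "z \<in> closed_segment x1 y1" and z2: "z \<in> closed_segment x2 y2"
    and cr: "cross (y1 - x1) (y2 - x2) \<noteq> 0"
  shows "closed_segment x1 y1 \<inter> closed_segment x2 y2 = {z}"
proof -
  have "w = z" if w1: "w \<in> closed_segment x1 y1" and w2: "w \<in> closed_segment x2 y2" for w
  proof -
    obtain a1 where a1: "w = (1 - a1) *\<^sub>R x1 + a1 *\<^sub>R y1" using seg_param[OF w1] by blast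
    obtain b1 where b1: "z = (1 - b1) *\<^sub>R x1 + b1 *\<^sub>R y1" using seg_param[OF z1] by blast
    obtain a2 where a2: "w = (1 - a2) *\<^sub>R x2 + a2 *\<^sub>R y2" using seg_param[OF w2] by blast
    obtain b2 where b2: "z = (1 - b2) *\<^sub>R x2 + b2 *\<^sub>R y2" using seg_param[OF z2] by blast
    have e1: "w - z = (a1 - b1) *\<^sub>R (y1 - x1)" unfolding a1 b1 by (simp add: algebra_simps)
    have e2: "w - z = (a2 - b2) *\<^sub>R (y2 - x2)" unfolding a2 b2 by (simp add: algebra_simps)
    have "cross (w - z) (y2 - x2) = (a1 - b1) * cross (y1 - x1) (y2 - x2)"
      using e1 cross_scale[of "a1 - b1" "y1 - x1" 1 "y2 - x2"] by simp
    moreover have "cross (w - z) (y2 - x2) = 0"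
      using e2 cross_scale[of "a2 - b2" "y2 - x2" 1 "y2 - x2"] cross_self by simp
    ultimately have "a1 = b1" using cr by simp
    thus "w = z" using a1 b1 by simp
  qed
  thus ?thesis using z1 z2 by blast
qed

lemma open_seg_param:
  fixes x y z :: point
  assumes "z = (1 - u) *\<^sub>R x + u *\<^sub>R y" "0 < u" "u < 1" "x \<noteq> y"
  shows "z \<in> open_segment x y"
proof -
  have "z \<in> closed_segment x y" using assms by (auto simp: closed_segment_def)
  moreover have "z \<noteq> x"
  proof
    assume "z = x" hence "u *\<^sub>R (y - x) = 0" using assms(1) by (simp add: algebra_simps)
    thus False using assms by simp
  qed
  moreover have "z \<noteq> y"
  proof
    assume "z = y" hence "(1 - u) *\<^sub>R (x - y) = 0" using assms(1) by (simp add: algebra_simps)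
    thus False using assms by simp
  qed
  ultimately show ?thesis by (simp add: open_segment_def)
qed

context L2
begin

lemma PCe:
  assumes s0: "a < s0" "s0 < b" and e0: "\<epsilon>0 > 0" and mu: "\<mu> > 0" and dl: "\<delta> = 1 \<or> \<delta> = -1"
    and H: "\<And>\<epsilon>. 0 < \<epsilon> \<Longrightarrow> \<epsilon> \<le> \<epsilon>0 \<Longrightarrow> curve ps (s0 + \<delta> * \<epsilon>) = q + (ts - \<epsilon> * \<mu>) *\<^sub>R D"
  shows False
proof -
  define \<epsilon> where "\<epsilon> = min \<epsilon>0 (min (s0 - a) (min (b - s0) (ts / \<mu>)))"
  have ep: "0 < \<epsilon>" "\<epsilon> \<le> \<epsilon>0" "\<epsilon> \<le> s0 - a" "\<epsilon> \<le> b - s0" "\<epsilon> \<le> ts / \<mu>"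
    using s0 e0 mu ts by (auto simp: \<epsilon>_def)
  have h1: "\<epsilon> * \<mu> \<le> ts" using ep(5) mu by (simp add: le_divide_eq)
  have h2: "0 < \<epsilon> * \<mu>" using ep mu by simp
  have "s0 + \<delta> * \<epsilon> \<in> {a..b}" using dl ep by auto
  hence "q + (ts - \<epsilon> * \<mu>) *\<^sub>R D \<in> L1" using H[OF ep(1,2)] by (metis image_eqI)
  moreover have "0 \<le> ts - \<epsilon> * \<mu>" "ts - \<epsilon> * \<mu> < ts" using h1 h2 by simp_all
  ultimately have "q + (ts - \<epsilon> * \<mu>) *\<^sub>R D \<in> L1" "0 \<le> ts - \<epsilon> * \<mu>" "ts - \<epsilon> * \<mu> < ts" by simp_all
  thus False using tmin by blast
qed

end

context L2
begin

lemma cross_D: "cross (\<kappa> *\<^sub>R D) x = - \<kappa> * cross x D"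
  using cross_scale[of \<kappa> D 1 x] cross_swap[of D x] by simp

lemma par_case:
  assumes s0: "a < s0" "s0 < b" and ni: "s0 \<noteq> of_int \<lfloor>s0\<rfloor>" and cz: "curve ps s0 = q + ts *\<^sub>R D"
    and cr: "cross (nxt ps (nat (\<lfloor>s0\<rfloor> mod int n)) - ps ! nat (\<lfloor>s0\<rfloor> mod int n)) D = 0"
  shows False
proof -
  define m0 where "m0 = \<lfloor>s0\<rfloor>"
  define j where "j = nat (m0 mod int n)"
  have j: "j < n" using idx_lt[OF ne] by (simp add: j_def)
  have m0: "of_int m0 < s0" "s0 < of_int m0 + 1" using ni unfolding m0_def by linarith+
  have dne: "nxt ps j - ps ! j \<noteq> 0" using leg_ne[OF j] by simp
  obtain \<kappa> where k: "nxt ps j - ps ! j = \<kappa> *\<^sub>R D" using par[OF _ D0] cr by (metis j_def m0_def)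
  have k0: "\<kappa> \<noteq> 0" using k dne by auto
  show False
  proof (cases "\<kappa> > 0")
    case True
    show False
    proof (rule PCe[OF s0, of "s0 - of_int m0" \<kappa> "-1"])
      show "s0 - of_int m0 > 0" "\<kappa> > 0" "-1 = 1 \<or> -1 = (-1::real)" using m0 True by auto
      fix \<epsilon> :: real assume e: "0 < \<epsilon>" "\<epsilon> \<le> s0 - of_int m0"
      have "curve ps (s0 - \<epsilon>) = curve ps s0 - \<epsilon> *\<^sub>R (ps ! nx n j - ps ! j)"
        using curve_left[OF ne, of m0 s0 \<epsilon>] e m0 by (simp add: j_def)
      also have "\<dots> = q + (ts - \<epsilon> * \<kappa>) *\<^sub>R D" using cz k by (simp add: nxt_nx algebra_simps)
      finally show "curve ps (s0 + -1 * \<epsilon>) = q + (ts - \<epsilon> * \<kappa>) *\<^sub>R D" by simp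
    qed
  next
    case False
    hence kn: "\<kappa> < 0" using k0 by simp
    show False
    proof (rule PCe[OF s0, of "of_int m0 + 1 - s0" "-\<kappa>" 1])
      show "of_int m0 + 1 - s0 > 0" "-\<kappa> > 0" "1 = 1 \<or> 1 = (-1::real)" using m0 kn by auto
      fix \<epsilon> :: real assume e: "0 < \<epsilon>" "\<epsilon> \<le> of_int m0 + 1 - s0"
      have "curve ps (s0 + \<epsilon>) = curve ps s0 + \<epsilon> *\<^sub>R (ps ! nx n j - ps ! j)"
        using curve_right[OF ne, of m0 s0 \<epsilon>] e m0 by (simp add: j_def)
      also have "\<dots> = q + (ts - \<epsilon> * - \<kappa>) *\<^sub>R D" using cz k by (simp add: nxt_nx algebra_simps)
      finally show "curve ps (s0 + 1 * \<epsilon>) = q + (ts - \<epsilon> * - \<kappa>) *\<^sub>R D" by simp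
    qed
  qed
qed

end

context L2
begin

lemma final: False
proof -
  obtain m s' s where ex: "ps ! bkp fw n (idx m) = q + s' *\<^sub>R D" "ps ! idx m = q + s *\<^sub>R D" "s' < ts" "ts \<le> s"
    using exit_exists by blast
  define k where "k = idx m"
  have k: "k < n" using idx_bound by (simp add: k_def)
  define u where "u = ps ! bkp fw n k"
  define wv where "wv = ps ! k"
  define z where "z = q + ts *\<^sub>R D"
  have u: "u = q + s' *\<^sub>R D" and wv: "wv = q + s *\<^sub>R D" using ex by (simp_all add: u_def wv_def k_def)
  have zu: "z \<noteq> u" using u ex(3) D0 by (auto simp: z_def algebra_simps)
  have zseg: "z \<in> closed_segment u wv"
  proof -
    define \<theta> where "\<theta> = (ts - s') / (s - s')"
    have ss: "s - s' > 0" using ex by simp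
    have th: "0 \<le> \<theta>" "\<theta> \<le> 1" using ex ss by (auto simp: \<theta>_def divide_simps)
    have "s' + \<theta> * (s - s') = ts" using ss by (simp add: \<theta>_def)
    hence "z = (1 - \<theta>) *\<^sub>R u + \<theta> *\<^sub>R wv" unfolding z_def u wv
      by (simp add: algebra_simps) (metis add.commute scaleR_add_left)
    thus ?thesis using th by (auto simp: closed_segment_def)
  qed
  obtain i where i: "i < n" "(ps ! i = u \<and> nxt ps i = wv) \<or> (ps ! i = wv \<and> nxt ps i = u)"
  proof (cases fw)
    case True
    have "ps ! pv n k = u" "nxt ps (pv n k) = wv" using True k n0
      by (simp_all add: u_def wv_def bkp_def nxt_nx nx_pv)
    thus ?thesis using that[of "pv n k"] pv_lt n0 by blast
  next
    case False
    have "ps ! k = wv" "nxt ps k = u" using False k n0 by (simp_all add: u_def wv_def bkp_def nxt_nx)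
    thus ?thesis using that[of k] k by blast
  qed
  obtain \<kappa>i where di: "nxt ps i - ps ! i = \<kappa>i *\<^sub>R D" "\<kappa>i \<noteq> 0"
  proof -
    have "wv - u = (s - s') *\<^sub>R D" using u wv by (simp add: algebra_simps)
    moreover have "u - wv = (s' - s) *\<^sub>R D" using u wv by (simp add: algebra_simps)
    moreover have "s - s' \<noteq> 0" "s' - s \<noteq> 0" using ex by auto
    ultimately show ?thesis using that i by (elim disjE conjE) (metis, metis)
  qed
  have zi: "z \<in> closed_segment (ps ! i) (nxt ps i)" using i zseg closed_segment_commute by metis
  obtain s0 where s0: "s0 \<in> {a..b}" "curve ps s0 = z" using z_in z_def by auto
  have fz: "fst z \<noteq> c" using ray_side[OF ts] by (auto simp: z_def)
  have s0ab: "a < s0" "s0 < b" using s0 ca cb on1 on2 fz by (auto simp: less_le)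
  define m0 where "m0 = \<lfloor>s0\<rfloor>"
  define j where "j = nat (m0 mod int n)"
  have j: "j < n" using idx_lt[OF ne] by (simp add: j_def)
  have czt: "curve ps s0 = q + ts *\<^sub>R D" using s0 z_def by simp
  have vert_int: "s0 = of_int m0 \<Longrightarrow> ps ! j = z"
    using s0 curve_int[of ps m0] by (simp add: j_def)
  have open_j: "s0 \<noteq> of_int m0 \<Longrightarrow> z \<in> open_segment (ps ! j) (nxt ps j)"
  proof -
    assume ni: "s0 \<noteq> of_int m0"
    have m0: "of_int m0 < s0" "s0 < of_int m0 + 1" using ni unfolding m0_def by linarith+
    have "z = (1 - (s0 - of_int m0)) *\<^sub>R ps ! j + (s0 - of_int m0) *\<^sub>R ps ! nx n j"
      using curve_on[OF ne, of m0 s0] m0 s0 by (simp add: j_def)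
    thus ?thesis using open_seg_param m0 leg_ne[OF j] by (simp add: nxt_nx)
  qed
  show False
  proof (cases "ts = s")
    case True
    hence zk: "ps ! k = z" using wv wv_def z_def by simp
    show False
    proof (cases "s0 = of_int m0")
      case True
      hence "ps ! j = ps ! k" using vert_int zk by simp
      hence jk: "j = k" using nth_inj j k by blast
      show False
      proof (cases fw)
        case True
        have uu: "u = ps ! pv n k" using True by (simp add: u_def bkp_def)
        show False
        proof (rule PCe[OF s0ab, of 1 "ts - s'" "-1"])
          show "(1::real) > 0" "ts - s' > 0" "-1 = 1 \<or> -1 = (-1::real)" using ex by auto
          fix \<epsilon> :: real assume e: "0 < \<epsilon>" "\<epsilon> \<le> 1"
          have "curve ps (of_int m0 - \<epsilon>) = curve ps (of_int m0) + \<epsilon> *\<^sub>R (ps ! pv n j - ps ! j)"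
            using curve_left_int[OF ne, of \<epsilon> m0] e by (simp add: j_def)
          also have "\<dots> = q + (ts - \<epsilon> * (ts - s')) *\<^sub>R D"
          proof -
            have pvk: "ps ! pv n j = q + s' *\<^sub>R D" using uu u jk by simp
            have cj: "curve ps (of_int m0) = q + ts *\<^sub>R D" using czt \<open>s0 = of_int m0\<close> by simp
            have pj: "ps ! j = q + ts *\<^sub>R D" using zk jk z_def by simp
            show ?thesis unfolding pvk cj pj by (simp add: algebra_simps)
          qed
          finally show "curve ps (s0 + -1 * \<epsilon>) = q + (ts - \<epsilon> * (ts - s')) *\<^sub>R D" using \<open>s0 = of_int m0\<close> by simp
        qed
      next
        case False
        have uu: "u = ps ! nx n k" using False by (simp add: u_def bkp_def)
        show False
        proof (rule PCe[OF s0ab, of 1 "ts - s'" 1])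
          show "(1::real) > 0" "ts - s' > 0" "1 = 1 \<or> 1 = (-1::real)" using ex by auto
          fix \<epsilon> :: real assume e: "0 < \<epsilon>" "\<epsilon> \<le> 1"
          have "curve ps (s0 + \<epsilon>) = curve ps s0 + \<epsilon> *\<^sub>R (ps ! nx n j - ps ! j)"
            using curve_right[OF ne, of m0 s0 \<epsilon>] e \<open>s0 = of_int m0\<close> by (simp add: j_def)
          also have "\<dots> = q + (ts - \<epsilon> * (ts - s')) *\<^sub>R D"
          proof -
            have nxk: "ps ! nx n j = q + s' *\<^sub>R D" using uu u jk by simp
            have pj: "ps ! j = q + ts *\<^sub>R D" using zk jk z_def by simp
            show ?thesis unfolding nxk czt pj by (simp add: algebra_simps)
          qed
          finally show "curve ps (s0 + 1 * \<epsilon>) = q + (ts - \<epsilon> * (ts - s')) *\<^sub>R D" by simp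
        qed
      qed
    next
      case False
      have oj: "z \<in> open_segment (ps ! j) (nxt ps j)" using open_j False by blast
      show False
      proof (cases "cross (nxt ps j - ps ! j) D = 0")
        case True
        thus False using par_case[OF s0ab _ czt] False by (simp add: j_def m0_def)
      next
        case crj: False
        obtain bb where bb: "bb \<in> P" "ps ! k \<in> vseg bb" using vert_on_seg k by (meson nth_mem)
        have st: "ps ! k \<in> closed_segment (ps ! pv n k) (ps ! nx n k)"
          using reloc[OF inj tour opt k j, of z bb] oj zk bb by (auto simp: open_segment_def)
        obtain \<kappa> where kap: "ps ! nx n k - ps ! pv n k = \<kappa> *\<^sub>R D"
        proof (cases fw)
          case True
          hence "ps ! pv n k = q + s' *\<^sub>R D" using u by (simp add: u_def bkp_def)
          thus ?thesis using col[of z "ps ! pv n k" "ps ! nx n k" q ts D s'] st zk z_def ex D0 that by auto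
        next
          case False
          hence "ps ! nx n k = q + s' *\<^sub>R D" using u by (simp add: u_def bkp_def)
          moreover have "z \<in> closed_segment (ps ! nx n k) (ps ! pv n k)" using st zk closed_segment_commute by metis
          ultimately obtain \<kappa>' where "ps ! pv n k - ps ! nx n k = \<kappa>' *\<^sub>R D"
            using col[of z "ps ! nx n k" "ps ! pv n k" q ts D s'] z_def ex D0 by auto
          hence "ps ! nx n k - ps ! pv n k = (- \<kappa>') *\<^sub>R D" by (simp add: algebra_simps)
          thus ?thesis using that by blast
        qed
        have "\<kappa> \<noteq> 0"
        proof
          assume "\<kappa> = 0"
          hence "ps ! nx n k = ps ! pv n k" using kap by simp
          hence "ps ! k = ps ! pv n k" "ps ! k = ps ! nx n k" using st by auto
          moreover have "u = ps ! pv n k \<or> u = ps ! nx n k" by (cases fw) (auto simp: u_def bkp_def)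
          ultimately show False using zk zu by auto
        qed
        hence "cross (ps ! nx n k - ps ! pv n k) (nxt ps j - ps ! j) \<noteq> 0"
          using kap crj cross_D by simp
        thus False using twoopt[OF inj tour opt k j st] oj zk by simp
      qed
    qed
  next
    case False
    hence tsl: "ts < s" using ex by simp
    have zw: "z \<noteq> wv" using wv tsl D0 by (auto simp: z_def algebra_simps)
    have oi: "z \<in> open_segment (ps ! i) (nxt ps i)" using zi i zu zw by (auto simp: open_segment_def)
    show False
    proof (cases "s0 = of_int m0")
      case False
      have oj: "z \<in> open_segment (ps ! j) (nxt ps j)" using open_j False by blast
      show False
      proof (cases "cross (nxt ps j - ps ! j) D = 0")
        case True
        thus False using par_case[OF s0ab _ czt] False by (simp add: j_def m0_def)
      next
        case crj: False
        have crij: "cross (nxt ps i - ps ! i) (nxt ps j - ps ! j) \<noteq> 0"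
          using di crj cross_D by simp
        have ij: "i \<noteq> j"
        proof
          assume "i = j"
          hence "cross (nxt ps j - ps ! j) D = 0" using di cross_scale[of "\<kappa>i" D 1 D] cross_self by simp
          thus False using crj by simp
        qed
        have "leg ps i \<inter> leg ps j = {z}"
          unfolding leg_def using inter1[OF zi _ crij] oj by (auto simp: open_segment_def)
        hence "legs_cross ps i j" using oi oj by (auto simp: legs_cross_def)
        thus False using nsc i(1) j ij by (auto simp: non_self_crossing_def)
      qed
    next
      case True
      have zj: "ps ! j = z" using vert_int True by simp
      obtain bb where bb: "bb \<in> P" "ps ! j \<in> vseg bb" using vert_on_seg j by (meson nth_mem)
      have st: "ps ! j \<in> closed_segment (ps ! pv n j) (ps ! nx n j)"
        using reloc[OF inj tour opt j i(1), of z bb] oi zj bb by (auto simp: open_segment_def)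
      have pvj: "ps ! pv n j \<noteq> z" "ps ! nx n j \<noteq> z"
        using zj nth_inj pv_ne nx_ne pv_lt nx_lt n0 j by metis+
      show False
      proof (cases "cross (ps ! nx n j - ps ! pv n j) D = 0")
        case True
        have dne: "ps ! nx n j - ps ! pv n j \<noteq> 0"
        proof
          assume "ps ! nx n j - ps ! pv n j = 0"
          hence "ps ! nx n j = ps ! pv n j" by simp
          hence "ps ! j = ps ! pv n j" using st by simp
          thus False using zj pvj by simp
        qed
        obtain \<kappa> where kap: "ps ! nx n j - ps ! pv n j = \<kappa> *\<^sub>R D" using par[OF True D0] by blast
        have k0: "\<kappa> \<noteq> 0" using kap dne by auto
        obtain c1 where c1: "c1 > 0" "z - ps ! pv n j = c1 *\<^sub>R (ps ! nx n j - ps ! pv n j)"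
          using seg_dir'[OF st] zj pvj by metis
        obtain c2 where c2: "c2 > 0" "ps ! nx n j - z = c2 *\<^sub>R (ps ! nx n j - ps ! pv n j)"
          using seg_dir[OF st] zj pvj by metis
        show False
        proof (cases "\<kappa> > 0")
          case True
          show False
          proof (rule PCe[OF s0ab, of 1 "c1 * \<kappa>" "-1"])
            show "(1::real) > 0" "c1 * \<kappa> > 0" "-1 = 1 \<or> -1 = (-1::real)" using c1 True by auto
            fix \<epsilon> :: real assume e: "0 < \<epsilon>" "\<epsilon> \<le> 1"
            have "curve ps (of_int m0 - \<epsilon>) = curve ps (of_int m0) + \<epsilon> *\<^sub>R (ps ! pv n j - ps ! j)"
              using curve_left_int[OF ne, of \<epsilon> m0] e by (simp add: j_def)
            also have "ps ! pv n j - ps ! j = - ((c1 * \<kappa>) *\<^sub>R D)" using c1 kap zj by (simp add: algebra_simps)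
            also have "curve ps (of_int m0) = q + ts *\<^sub>R D" using czt True \<open>s0 = of_int m0\<close> by simp
            finally show "curve ps (s0 + -1 * \<epsilon>) = q + (ts - \<epsilon> * (c1 * \<kappa>)) *\<^sub>R D"
              using \<open>s0 = of_int m0\<close> by (simp add: algebra_simps)
          qed
        next
          case False
          hence kn: "\<kappa> < 0" using k0 by simp
          show False
          proof (rule PCe[OF s0ab, of 1 "- (c2 * \<kappa>)" 1])
            show "(1::real) > 0" "- (c2 * \<kappa>) > 0" "1 = 1 \<or> 1 = (-1::real)" using c2 kn by (auto simp: mult_pos_neg)
            fix \<epsilon> :: real assume e: "0 < \<epsilon>" "\<epsilon> \<le> 1"
            have "curve ps (s0 + \<epsilon>) = curve ps s0 + \<epsilon> *\<^sub>R (ps ! nx n j - ps ! j)"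
              using curve_right[OF ne, of m0 s0 \<epsilon>] e \<open>s0 = of_int m0\<close> by (simp add: j_def)
            also have "ps ! nx n j - ps ! j = (c2 * \<kappa>) *\<^sub>R D" using c2 kap zj by simp
            finally show "curve ps (s0 + 1 * \<epsilon>) = q + (ts - \<epsilon> * - (c2 * \<kappa>)) *\<^sub>R D"
              using czt by (simp add: algebra_simps)
          qed
        qed
      next
        case False
        hence "cross (ps ! nx n j - ps ! pv n j) (nxt ps i - ps ! i) \<noteq> 0"
          using di cross_scale[of 1 "ps ! nx n j - ps ! pv n j" "\<kappa>i" D] by simp
        thus False using twoopt[OF inj tour opt j i(1) st] oi zj by simp
      qed
    qed
  qed
qed

end

lemma opp_sides:
  fixes x y q :: point and \<sigma> c :: real
  assumes q: "q = (1 - \<theta>) *\<^sub>R x + \<theta> *\<^sub>R y" and th: "0 < \<theta>" "\<theta> < 1" and fq: "fst q = c"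
    and fx: "fst x \<noteq> fst y" and sg: "\<sigma> = 1 \<or> \<sigma> = -1"
  shows "\<sigma> * c < \<sigma> * fst y \<or> \<sigma> * c < \<sigma> * fst x"
    "x = q + (- \<theta> / (1 - \<theta>)) *\<^sub>R (y - q)" "y = q + (- (1 - \<theta>) / \<theta>) *\<^sub>R (x - q)"
proof -
  have "fst q = (1 - \<theta>) * fst x + \<theta> * fst y" using q by simp
  hence e: "(1 - \<theta>) * (fst x - c) + \<theta> * (fst y - c) = 0" using fq by (simp add: algebra_simps)
  have nz: "fst x - c \<noteq> 0 \<and> fst y - c \<noteq> 0"
  proof (rule ccontr)
    assume "\<not> (fst x - c \<noteq> 0 \<and> fst y - c \<noteq> 0)"
    thus False using e th fx by auto
  qed
  show "\<sigma> * c < \<sigma> * fst y \<or> \<sigma> * c < \<sigma> * fst x"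
  proof (rule ccontr)
    assume "\<not> ?thesis"
    hence "\<sigma> * (fst y - c) \<le> 0" "\<sigma> * (fst x - c) \<le> 0" by (auto simp: algebra_simps)
    hence "\<sigma> * (fst y - c) < 0" "\<sigma> * (fst x - c) < 0" using nz sg by auto
    hence "(1 - \<theta>) * (\<sigma> * (fst x - c)) + \<theta> * (\<sigma> * (fst y - c)) < 0"
      using th by (simp add: add_neg_neg mult_pos_neg)
    moreover have "(1 - \<theta>) * (\<sigma> * (fst x - c)) + \<theta> * (\<sigma> * (fst y - c)) = \<sigma> * ((1 - \<theta>) * (fst x - c) + \<theta> * (fst y - c))"
      by (simp add: algebra_simps)
    ultimately show False using e by simp
  qed
  have t1: "1 - \<theta> \<noteq> 0" "\<theta> \<noteq> 0" using th by auto
  have yq: "y - q = (1 - \<theta>) *\<^sub>R (y - x)" using q by (simp add: algebra_simps)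
  have xq: "x - q = \<theta> *\<^sub>R (x - y)" using q by (simp add: algebra_simps)
  have "(- \<theta> / (1 - \<theta>)) *\<^sub>R (y - q) = ((- \<theta> / (1 - \<theta>)) * (1 - \<theta>)) *\<^sub>R (y - x)" using yq by simp
  also have "(- \<theta> / (1 - \<theta>)) * (1 - \<theta>) = - \<theta>" using t1 by simp
  also have "(- \<theta>) *\<^sub>R (y - x) = x - q" using xq by (simp add: algebra_simps)
  finally have "(- \<theta> / (1 - \<theta>)) *\<^sub>R (y - q) = x - q" .
  thus "x = q + (- \<theta> / (1 - \<theta>)) *\<^sub>R (y - q)" by (metis add.commute diff_add_cancel)
  have "(- (1 - \<theta>) / \<theta>) *\<^sub>R (x - q) = ((- (1 - \<theta>) / \<theta>) * \<theta>) *\<^sub>R (x - y)" using xq by simp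
  also have "(- (1 - \<theta>) / \<theta>) * \<theta> = - (1 - \<theta>)" using t1 by simp
  also have "(- (1 - \<theta>)) *\<^sub>R (x - y) = y - q" using yq by (simp add: algebra_simps)
  finally have "(- (1 - \<theta>) / \<theta>) *\<^sub>R (x - q) = y - q" .
  thus "y = q + (- (1 - \<theta>) / \<theta>) *\<^sub>R (x - q)" by (metis add.commute diff_add_cancel)
qed

context L
begin

lemma side_L1: "(\<forall>t\<in>{a<..<b}. \<sigma> * c < \<sigma> * fst (curve ps t)) \<Longrightarrow> x \<in> L1 \<Longrightarrow> \<sigma> * c \<le> \<sigma> * fst x"
proof -
  assume sd: "\<forall>t\<in>{a<..<b}. \<sigma> * c < \<sigma> * fst (curve ps t)" and "x \<in> L1"
  then obtain t where t: "t \<in> {a..b}" "x = curve ps t" by blast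
  show ?thesis
  proof (cases "t = a \<or> t = b")
    case True thus ?thesis using t ca cb on1 on2 by auto
  next
    case False thus ?thesis using t sd by (auto intro: less_imp_le)
  qed
qed

lemma L1_leg': "x \<in> L1 \<Longrightarrow> \<exists>j<n. x \<in> closed_segment (ps ! j) (nxt ps j)"
  using curve_leg[OF ne] idx_lt[OF ne] by blast

lemma start_dir:
  assumes sg: "\<sigma> = 1 \<or> \<sigma> = -1"
  shows "\<exists>fw k1 lam. k1 < n \<and> \<sigma> * c < \<sigma> * fst (ps ! k1) \<and> lam \<le> 0 \<and> ps ! (bkp fw n k1) = q + lam *\<^sub>R (ps ! k1 - q)"
proof -
  obtain t0 where t0: "q = curve ps t0" using qr by blast
  define i0 where "i0 = nat (\<lfloor>t0\<rfloor> mod int n)"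
  have i0: "i0 < n" using idx_lt[OF ne] by (simp add: i0_def)
  have qleg: "q \<in> closed_segment (ps ! i0) (ps ! nx n i0)" using curve_leg[OF ne, of t0] t0 by (simp add: i0_def nxt_nx)
  have fq: "fst q = c" using q_props by simp
  show ?thesis
  proof (cases "\<exists>k0<n. ps ! k0 = q")
    case True
    then obtain k0 where k0: "k0 < n" "ps ! k0 = q" by blast
    obtain bb where bb: "bb \<in> P" "q \<in> vseg bb" using vert_on_seg k0 by (metis nth_mem)
    have p1L: "p1 \<in> L1" and p2L: "p2 \<in> L1" using ca cb ab by auto
    have h: "\<bar>snd p1 - snd p2\<bar> \<le> 1" using strip_height[OF p1L p2L] strip_height[OF p2L p1L] by simp
    have "(snd bb \<le> min (snd p1) (snd p2) \<and> min (snd p1) (snd p2) \<le> snd bb + 1) \<or>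
          (snd bb \<le> max (snd p1) (snd p2) \<and> max (snd p1) (snd p2) \<le> snd bb + 1)"
    proof -
      have m1: "min (snd p1) (snd p2) \<le> snd q" "snd q \<le> max (snd p1) (snd p2)" using q_props by auto
      have m2: "max (snd p1) (snd p2) - min (snd p1) (snd p2) \<le> 1" using h by (simp add: min_def max_def abs_if split: if_splits)
      have "snd bb \<le> snd q" "snd q \<le> snd bb + 1" using bb vseg_iff by auto
      thus ?thesis using cover[OF m1 m2] by blast
    qed
    hence "\<exists>w\<in>{p1,p2}. snd bb \<le> snd w \<and> snd w \<le> snd bb + 1"
      by (cases "snd p1 \<le> snd p2") (auto simp: min_def max_def)
    then obtain w where w0: "w \<in> {p1,p2}" "snd bb \<le> snd w" "snd w \<le> snd bb + 1" by blast
    have fb: "fst bb = c" using bb vseg_fst q_props by metis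
    have "fst w = c" using w0 on1 on2 by auto
    hence "w \<in> vseg bb" using w0 fb vseg_iff by auto
    moreover have "w \<in> L1" "w \<noteq> q" using w0 p1L p2L q_props by auto
    ultimately have w: "w \<in> L1" "w \<in> vseg bb" "w \<noteq> q" by auto
    obtain j where j: "j < n" "w \<in> closed_segment (ps ! j) (nxt ps j)" using L1_leg' w by blast
    have fwq: "fst w = fst q" using w bb vseg_fst by metis
    have "ps ! k0 \<noteq> ps ! j"
    proof
      assume e: "ps ! k0 = ps ! j"
      have "w = ps ! j" using nonvert[OF leg_fst[OF j(1)] j(2), of "ps ! j"] fwq e k0 by simp
      thus False using w e k0 by simp
    qed
    moreover have "ps ! k0 \<noteq> nxt ps j"
    proof
      assume e: "ps ! k0 = nxt ps j"
      have "w = nxt ps j" using nonvert[OF leg_fst[OF j(1)] j(2), of "nxt ps j"] fwq e k0 by simp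
      thus False using w e k0 by simp
    qed
    ultimately have st: "q \<in> closed_segment (ps ! pv n k0) (ps ! nx n k0)"
      using reloc[OF inj tour opt k0(1) j(1) j(2) _ _ bb(1) _ w(2)] k0 bb by auto
    obtain \<theta> where th: "0 \<le> \<theta>" "\<theta> \<le> 1" "q = (1 - \<theta>) *\<^sub>R ps ! pv n k0 + \<theta> *\<^sub>R ps ! nx n k0"
      using seg_param[OF st] by blast
    have qx: "q \<noteq> ps ! pv n k0" "q \<noteq> ps ! nx n k0"
      using k0 nth_inj pv_ne nx_ne pv_lt nx_lt n0 by metis+
    have th': "0 < \<theta>" "\<theta> < 1" using th qx by (auto simp: less_le)
    have fxy: "fst (ps ! pv n k0) \<noteq> fst (ps ! nx n k0)"
    proof
      assume "fst (ps ! pv n k0) = fst (ps ! nx n k0)"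
      hence "pv n k0 = nx n k0" using fst_inj pv_lt nx_lt n0 by blast
      hence "ps ! pv n k0 = ps ! nx n k0" by simp
      thus False using st qx by simp
    qed
    have os: "\<sigma> * c < \<sigma> * fst (ps ! nx n k0) \<or> \<sigma> * c < \<sigma> * fst (ps ! pv n k0)"
      using opp_sides(1)[OF th(3) th' fq fxy sg] .
    show ?thesis
    proof (cases "\<sigma> * c < \<sigma> * fst (ps ! nx n k0)")
      case True
      have "ps ! bkp True n (nx n k0) = q + 0 *\<^sub>R (ps ! nx n k0 - q)"
        using k0 pv_nx[OF n0 k0(1)] by (simp add: bkp_def)
      thus ?thesis using True nx_lt n0 by (intro exI[of _ True] exI[of _ "nx n k0"] exI[of _ 0]) auto
    next
      case False
      hence sx: "\<sigma> * c < \<sigma> * fst (ps ! pv n k0)" using os by blast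
      have "ps ! bkp False n (pv n k0) = q + 0 *\<^sub>R (ps ! pv n k0 - q)"
        using k0 nx_pv[OF n0 k0(1)] by (simp add: bkp_def)
      thus ?thesis using sx pv_lt n0 by (intro exI[of _ False] exI[of _ "pv n k0"] exI[of _ 0]) auto
    qed
  next
    case False
    hence qx: "q \<noteq> ps ! i0" "q \<noteq> ps ! nx n i0" using i0 nx_lt[OF n0, of i0] by metis+
    obtain \<theta> where th: "0 \<le> \<theta>" "\<theta> \<le> 1" "q = (1 - \<theta>) *\<^sub>R ps ! i0 + \<theta> *\<^sub>R ps ! nx n i0"
      using seg_param[OF qleg] by blast
    have th': "0 < \<theta>" "\<theta> < 1" using th qx by (auto simp: less_le)
    have fxy: "fst (ps ! i0) \<noteq> fst (ps ! nx n i0)" using leg_fst[OF i0] by (simp add: nxt_nx)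
    note os = opp_sides[OF th(3) th' fq fxy sg]
    have l1: "- \<theta> / (1 - \<theta>) \<le> 0" using th' by (simp add: divide_nonpos_pos)
    have l2: "- (1 - \<theta>) / \<theta> \<le> 0" using th' by (simp add: divide_nonpos_pos)
    show ?thesis
    proof (cases "\<sigma> * c < \<sigma> * fst (ps ! nx n i0)")
      case True
      have "bkp True n (nx n i0) = i0" using pv_nx[OF n0 i0] by (simp add: bkp_def)
      thus ?thesis using True os(2) l1 nx_lt n0
        by (intro exI[of _ True] exI[of _ "nx n i0"] exI[of _ "- \<theta> / (1 - \<theta>)"]) auto
    next
      case False
      hence sx: "\<sigma> * c < \<sigma> * fst (ps ! i0)" using os(1) by blast
      have "bkp False n i0 = nx n i0" by (simp add: bkp_def)
      thus ?thesis using sx os(3) l2 i0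
        by (intro exI[of _ False] exI[of _ i0] exI[of _ "- (1 - \<theta>) / \<theta>"]) auto
    qed
  qed
qed

end

context L
begin

lemma L_false: False
proof -
  obtain \<sigma> where sg: "\<sigma> = 1 \<or> \<sigma> = -1" and side: "\<forall>t\<in>{a<..<b}. \<sigma> * c < \<sigma> * fst (curve ps t)"
    using side_exists by blast
  obtain fw k1 lam where k1: "k1 < n" "\<sigma> * c < \<sigma> * fst (ps ! k1)" "lam \<le> 0"
    "ps ! (bkp fw n k1) = q + lam *\<^sub>R (ps ! k1 - q)"
    using start_dir[OF sg] by blast
  define D where "D = ps ! k1 - q"
  have fq: "fst q = c" using q_props by simp
  have sD: "\<sigma> * fst D > 0" using k1(2) fq by (simp add: D_def algebra_simps)
  have W0: "ps ! k1 = q + D" by (simp add: D_def)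
  have sideL: "\<And>x. x \<in> L1 \<Longrightarrow> \<sigma> * c \<le> \<sigma> * fst x" using side_L1[OF side] by blast
  obtain B0 where B0: "\<forall>x\<in>L1. norm x \<le> B0" using compact_imp_bounded[OF L1_compact] by (meson bounded_iff)
  define B where "B = max B0 0"
  have B: "\<forall>x\<in>L1. norm x \<le> B" "B \<ge> 0" using B0 by (auto simp: B_def intro: order_trans)
  have absB: "\<bar>fst x\<bar> \<le> B" "\<bar>snd x\<bar> \<le> B" if "x \<in> L1" for x
  proof -
    have "norm (snd x) \<le> norm x" using norm_snd_le[where x="fst x" and y="snd x"] by simp
    moreover have "norm (fst x) \<le> norm x" using norm_fst_le[where x="fst x" and y="snd x"] by simp
    moreover have "norm x \<le> B" using B that by blast
    ultimately show "\<bar>fst x\<bar> \<le> B" "\<bar>snd x\<bar> \<le> B" by (simp_all add: real_norm_def)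
  qed
  define T where "T = (B + \<bar>c\<bar> + 1) / (\<sigma> * fst D)"
  have T0: "T > 0" using sD B by (simp add: T_def)
  define F where "F = q + T *\<^sub>R D"
  have "\<sigma> * fst F = \<sigma> * c + T * (\<sigma> * fst D)" using fq by (simp add: F_def algebra_simps)
  moreover have "T * (\<sigma> * fst D) = B + \<bar>c\<bar> + 1"
  proof -
    have "\<sigma> \<noteq> 0" "fst D \<noteq> 0" using sD by auto
    thus ?thesis unfolding T_def by simp
  qed
  ultimately have sF: "\<sigma> * fst F = \<sigma> * c + (B + \<bar>c\<bar> + 1)" by simp
  have sF': "\<sigma> * c \<le> \<sigma> * fst F" using sF B(2) by simp
  have Fout: "fst x \<noteq> fst F" if "x \<in> L1" for x
  proof
    assume e: "fst x = fst F"
    have "\<sigma> * fst x \<le> \<bar>fst x\<bar>" using sg by auto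
    moreover have "- \<bar>c\<bar> \<le> \<sigma> * c" using sg by auto
    ultimately show False using sF absB[OF that] arg_cong[OF e, of "\<lambda>v. \<sigma> * v"] by linarith
  qed
  have qA: "fst q = c" "min (snd (pathstart A)) (snd (pathfinish A)) < snd q" "snd q < max (snd (pathstart A)) (snd (pathfinish A))"
    using q_props A_start A_finish by auto
  have As: "fst (pathstart A) = c" "fst (pathfinish A) = c" using A_start A_finish on1 on2 by auto
  have sA: "\<forall>x\<in>path_image A. \<sigma> * c \<le> \<sigma> * fst x" using sideL A_image by simp
  have "\<forall>x\<in>path_image A. snd x < B + 1" using absB A_image by fastforce
  then obtain p where p: "p \<in> path_image A" "p \<in> closed_segment q F \<or> p \<in> closed_segment F (fst F, B + 1)"
    using hit3[OF A_path sg sA As qA sF'] by blast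
  have pL: "p \<in> L1" using p A_image by simp
  have "p \<notin> closed_segment F (fst F, B + 1)" using seg_vert(1) Fout[OF pL] by blast
  hence "p \<in> closed_segment q F" using p by blast
  then obtain \<theta> where th: "0 \<le> \<theta>" "\<theta> \<le> 1" "p = q + (\<theta> * T) *\<^sub>R D" using seg_ray F_def by blast
  define K where "K = {t. 0 \<le> t \<and> t \<le> T \<and> q + t *\<^sub>R D \<in> L1}"
  have Kne: "K \<noteq> {}" using th pL T0 by (auto simp: K_def intro!: exI[of _ "\<theta> * T"] mult_left_le_one_le)
  have Kcl: "closed K"
  proof -
    have "K = {0..T} \<inter> (\<lambda>t. q + t *\<^sub>R D) -` L1" by (auto simp: K_def)
    moreover have "closed ((\<lambda>t. q + t *\<^sub>R D) -` L1)"
      by (intro continuous_closed_vimage compact_imp_closed L1_compact) (auto intro!: continuous_intros)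
    ultimately show ?thesis by auto
  qed
  have Kbd: "bdd_below K" by (auto simp: K_def bdd_below_def)
  define ts where "ts = Inf K"
  have tsK: "ts \<in> K" using closed_contains_Inf[OF Kne Kbd Kcl] by (simp add: ts_def)
  have tsmin: "\<And>t. t \<in> K \<Longrightarrow> ts \<le> t" using cInf_lower Kbd by (auto simp: ts_def)
  have ts0: "ts > 0"
  proof -
    have "ts \<ge> 0" using tsK by (simp add: K_def)
    moreover have "ts \<noteq> 0" using tsK q_props(4) by (auto simp: K_def)
    ultimately show ?thesis by simp
  qed
  have z_in: "q + ts *\<^sub>R D \<in> L1" using tsK by (simp add: K_def)
  have tmin: "\<forall>\<tau>. 0 \<le> \<tau> \<longrightarrow> \<tau> < ts \<longrightarrow> q + \<tau> *\<^sub>R D \<notin> L1"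
  proof (intro allI impI)
    fix \<tau> assume t: "0 \<le> \<tau>" "\<tau> < ts"
    have "ts \<le> T" using tsK by (simp add: K_def)
    show "q + \<tau> *\<^sub>R D \<notin> L1"
    proof
      assume "q + \<tau> *\<^sub>R D \<in> L1"
      hence "\<tau> \<in> K" using t \<open>ts \<le> T\<close> by (simp add: K_def)
      thus False using tsmin t by fastforce
    qed
  qed
  have Wm: "ps ! (bkp fw n k1) = q + lam *\<^sub>R D" using k1(4) by (simp add: D_def)
  interpret L2 P ps \<tau> c a b p1 p2 q \<sigma> fw k1 D ts lam
    using sg side sD k1(1) W0 Wm k1(3) ts0 z_in tmin by unfold_locales auto
  show False by (rule final)
qed

end

theorem lemma20:
  fixes P :: "point set" and ps :: "point list" and \<tau> :: nat
    and c a b :: real and p1 p2 :: point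
  assumes inst: "seg_instance P"
    and tour: "is_tour P ps"
    and opt: "\<forall>qs. is_tour P qs \<longrightarrow> cost ps \<le> cost qs"
    and nc: "no_consec_same_seg P ps"
    and nsc: "non_self_crossing ps"
    and tau: "\<tau> \<ge> 1"
    and p12: "p1 \<noteq> p2"
    and on1: "fst p1 = c" and on2: "fst p2 = c"
    and ab: "a \<le> b"
    and ca: "curve ps a = p1" and cb: "curve ps b = p2"
    and L1_strip: "curve ps ` {a..b} \<subseteq> strip P \<tau>"
    and L1_nocross: "\<forall>t\<in>{a<..<b}. fst (curve ps t) \<noteq> c"
  shows "\<forall>q\<in>open_segment p1 p2. q \<notin> restr P ps \<tau>"
proof (intro ballI notI)
  fix q assume q: "q \<in> open_segment p1 p2" "q \<in> restr P ps \<tau>"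
  have qr: "q \<in> range (curve ps)" using q(2) by (simp add: restr_def)
  interpret L P ps \<tau> c a b p1 p2 q
    using inst tour opt nsc p12 on1 on2 ab ca cb L1_strip L1_nocross q(1) qr by unfold_locales auto
  show False by (rule L_false)
qed

end
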